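(* Let $d,m$ be positive integers and let $X=\{X_k:k\in\mathbb{Z}^d\}$ be a centered, complex-valued, strictly stationary random field with $E|X_0|^2=\sigma^2<\infty$ and $\varrho'(X,n)\to0$ as $n\to\infty$; let $f$ be its (continuous) spectral density, $f(\lambda):=f(e^{i\lambda})$. Let $\lambda\in\mathfrak P:=(-\pi,\pi]^d\setminus\{-\pi,0,\pi\}^d$. Let $\{v^{(n)}\}$ be a sequence in $\mathbb{N}^d$ with $\lim_n\min\{v^{(n)}_1,\dots,v^{(n)}_d\}=\infty$. Let $\{\lambda^{(j,n)}\}_{n=1}^\infty$, $j=1,\dots,m$, be sequences in $(-\pi,\pi]^d$ converging to $\lambda$ such that for every pair $j\ne k$ there are $\delta(j,k)\in(0,1/2)$ and $N(j,k)\in\mathbb{N}$ such that for every $n\ge N(j,k)$ some index $s$ satisfies $|\lambda^{(j,n)}_s-\lambda^{(k,n)}_s|>(v^{(n)}_s)^{-(1/2-\delta(j,k))}$. Let $\mathbf v=(a_1,b_1,\dots,a_m,b_m)\in\mathbb{R}^{2m}$ be fixed. Then \[\lim_{n\to\infty}\sup_{w\in\mathbb{Z}^d}\left|\tfrac12 f(\lambda)\|\mathbf v\|^2-\frac{1}{V^{(n)}}E\big[G(\mathbf v,\mathbf S_n^w)\big]^2\right|=0.\]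
   Context: Strictly stationary: all finite-dimensional joint distributions are invariant under translation of indices. $\varrho(\mathcal A,\mathcal B)=\sup\mathrm{Corr}(f,g)$ over real $f\in L^2(\mathcal A),g\in L^2(\mathcal B)$; $\varrho'(X,n)=\sup_{S,T}\varrho(\sigma(X_k:k\in S),\sigma(X_k:k\in T))$ over finite nonempty $S,T\subset\mathbb{Z}^d$ with $|k_u-l_u|\ge n$ for all $k\in S,l\in T$ for some coordinate $u$. The spectral density is the nonnegative function $f$ on $\mathbb{T}^d$ with $EX_k\overline{X_j}=\int_{\mathbb{T}^d}e^{i(k-j)\cdot\theta}f(e^{i\theta})\,dm^d$ ($m^d$ normalized Haar measure); it exists and is continuous under these hypotheses. $X_k^{(\mu)}:=e^{-ik\cdot\mu}X_k$; $\mathfrak B_n:=\{w\in\mathbb{N}^d:1\le w_j\le v^{(n)}_j\}$; $V^{(n)}:=\prod_jv^{(n)}_j$; $\mathfrak B_{w,n}:=\{k+w:k\in\mathfrak B_n\}$; $S^{(\mu)}_{\mathcal S}:=\sum_{k\in\mathcal S}X_k^{(\mu)}$. $\mathbf S_n^w:=\big(S^{(\lambda^{(1,n)})}_{\mathfrak B_{w,n}},\dots,S^{(\lambda^{(m,n)})}_{\mathfrak B_{w,n}}\big)\in\mathbb{C}^m$. For $\mathbf z\in\mathbb{C}^m$, $G(\mathbf v,\mathbf z):=\sum_{j=1}^m(a_j\,\mathrm{Re}\,z_j+b_j\,\mathrm{Im}\,z_j)$, and $\|\mathbf v\|^2=\sum_j(a_j^2+b_j^2)$. *)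

theory Defs
  imports "HOL-Probability.Probability"
begin

text \<open>Random field indexed by int^'d (the dimension d is CARD('d)).\<close>

definition strictly_stationary ::
  "'a measure \<Rightarrow> (int^'d \<Rightarrow> 'a \<Rightarrow> complex) \<Rightarrow> bool" where
  "strictly_stationary M X \<longleftrightarrow>
     (\<forall>S h. finite S \<longrightarrow>
        distr M (Pi\<^sub>M S (\<lambda>_. (borel :: complex measure))) (\<lambda>\<omega>. \<lambda>k\<in>S. X (k + h) \<omega>)
      = distr M (Pi\<^sub>M S (\<lambda>_. (borel :: complex measure))) (\<lambda>\<omega>. \<lambda>k\<in>S. X k \<omega>))"

definition sigma_field_gen ::
  "'a measure \<Rightarrow> (int^'d \<Rightarrow> 'a \<Rightarrow> complex) \<Rightarrow> (int^'d) set \<Rightarrow> 'a measure" where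
  "sigma_field_gen M X S =
     vimage_algebra (space M) (\<lambda>\<omega>. \<lambda>k\<in>S. X k \<omega>) (Pi\<^sub>M S (\<lambda>_. (borel :: complex measure)))"

definition covar :: "'a measure \<Rightarrow> ('a \<Rightarrow> real) \<Rightarrow> ('a \<Rightarrow> real) \<Rightarrow> real" where
  "covar M f g = (\<integral>x. f x * g x \<partial>M) - (\<integral>x. f x \<partial>M) * (\<integral>x. g x \<partial>M)"

definition corr :: "'a measure \<Rightarrow> ('a \<Rightarrow> real) \<Rightarrow> ('a \<Rightarrow> real) \<Rightarrow> real" where
  "corr M f g = covar M f g / sqrt (covar M f f * covar M g g)"

text \<open>Maximal correlation rho(A,B): sup of Corr(f,g) over real f in L2(A), g in L2(B)
  (with nonzero variances, so that Corr is defined); convention 0 if there are none.\<close>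
definition max_corr :: "'a measure \<Rightarrow> 'a measure \<Rightarrow> 'a measure \<Rightarrow> real" where
  "max_corr M A B =
    (let C = {corr M f g | f g.
                f \<in> borel_measurable A \<and> g \<in> borel_measurable B \<and>
                integrable M (\<lambda>x. (f x)\<^sup>2) \<and> integrable M (\<lambda>x. (g x)\<^sup>2) \<and>
                covar M f f > 0 \<and> covar M g g > 0}
     in if C = {} then 0 else Sup C)"

definition rho' :: "'a measure \<Rightarrow> (int^'d \<Rightarrow> 'a \<Rightarrow> complex) \<Rightarrow> nat \<Rightarrow> real" where
  "rho' M X n = Sup {max_corr M (sigma_field_gen M X S) (sigma_field_gen M X T) | S T.
       finite S \<and> S \<noteq> {} \<and> finite T \<and> T \<noteq> {} \<and>
       (\<exists>u. \<forall>k\<in>S. \<forall>l\<in>T. \<bar>k$u - l$u\<bar> \<ge> int n)}"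

definition torus :: "(complex^'d) set" where
  "torus = {z. \<forall>u. norm (z$u) = 1}"

text \<open>f is a spectral density of X: nonnegative function on T^d with
  E X_k conj(X_j) = int_{T^d} e^{i(k-j).theta} f(e^{i theta}) dm^d (normalized Haar measure).\<close>
definition is_spectral_density ::
  "'a measure \<Rightarrow> (int^'d \<Rightarrow> 'a \<Rightarrow> complex) \<Rightarrow> (complex^'d \<Rightarrow> real) \<Rightarrow> bool" where
  "is_spectral_density M X f \<longleftrightarrow>
     (\<forall>z\<in>torus. f z \<ge> 0) \<and>
     (\<forall>k j. (\<integral>\<omega>. X k \<omega> * cnj (X j \<omega>) \<partial>M) =
        integral (cbox (\<chi> _. -pi) (\<chi> _. pi))
          (\<lambda>\<theta>::real^'d. exp (\<i> * complex_of_real (\<Sum>u\<in>UNIV. real_of_int (k$u - j$u) * \<theta>$u))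
                         * complex_of_real (f (\<chi> u. cis (\<theta>$u))))
        / (2 * pi) ^ CARD('d))"

definition block :: "nat^'d \<Rightarrow> int^'d \<Rightarrow> (int^'d) set" where
  "block v w = {k + w | k. \<forall>u. 1 \<le> k$u \<and> k$u \<le> int (v$u)}"

definition twisted_sum ::
  "(int^'d \<Rightarrow> 'a \<Rightarrow> complex) \<Rightarrow> real^'d \<Rightarrow> (int^'d) set \<Rightarrow> 'a \<Rightarrow> complex" where
  "twisted_sum X \<mu> S \<omega> =
     (\<Sum>k\<in>S. exp (- \<i> * complex_of_real (\<Sum>u\<in>UNIV. real_of_int (k$u) * \<mu>$u)) * X k \<omega>)"

definition Gfun :: "nat \<Rightarrow> (nat \<Rightarrow> real) \<Rightarrow> (nat \<Rightarrow> real) \<Rightarrow> (nat \<Rightarrow> complex) \<Rightarrow> real" where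
  "Gfun m a b z = (\<Sum>j=1..m. a j * Re (z j) + b j * Im (z j))"

end

theory Submission
  imports Defs
begin

lemma vec_sum_basis_nth:
  fixes f :: "real^'d::finite \<Rightarrow> real"
  shows "(\<Sum>b\<in>Basis. f b *\<^sub>R b) $ u = f (axis u 1)"
proof -
  have "(\<Sum>b\<in>Basis. f b *\<^sub>R b) $ u = (\<Sum>b\<in>Basis. f b *\<^sub>R b) \<bullet> axis u 1"
    by (simp add: cart_eq_inner_axis)
  also have "\<dots> = (\<Sum>b\<in>Basis. f b * (b \<bullet> axis u 1))"
    by (simp add: inner_sum_left)
  also have "\<dots> = f (axis u 1)"
    by (subst sum.remove[of _ "axis u 1"]) (auto simp: inner_Basis intro!: sum.neutral)
  finally show ?thesis .
qed

lemma integral_cube_prod: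
  fixes g :: "'d::finite \<Rightarrow> real \<Rightarrow> complex"
  assumes cont: "\<And>u. continuous_on {-pi..pi} (g u)"
  shows "integral (cbox (\<chi> _. -pi) (\<chi> _. pi)) (\<lambda>\<theta>::real^'d. \<Prod>u\<in>UNIV. g u (\<theta>$u))
       = (\<Prod>u\<in>UNIV. integral {-pi..pi} (g u))"
proof -
  define C where "C = cbox (\<chi> _. -pi) (\<chi> _. pi :: real^'d)"
  define F where "F = (\<lambda>\<theta>::real^'d. \<Prod>u\<in>UNIV. g u (\<theta>$u))"
  have memC: "x \<in> C \<longleftrightarrow> (\<forall>u. x$u \<in> {-pi..pi})" for x
    by (auto simp: C_def mem_box_cart)
  have contF: "continuous_on C F"
    unfolding F_def
  proof (intro continuous_on_prod)
    fix u
    show "continuous_on C (\<lambda>x. g u (x $ u))"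
      by (rule continuous_on_compose2[OF cont[of u]]) (auto simp: memC intro!: continuous_intros)
  qed
  have compC: "compact C" by (simp add: C_def)
  have si: "set_integrable lborel C F"
    unfolding set_integrable_def by (rule borel_integrable_compact[OF compC contF])
  define H where "H = (\<lambda>(b::real^'d) t. indicator {-pi..pi} t *\<^sub>R g (SOME u. b = axis u 1) t)"
  have Hax: "H (axis u 1) = (\<lambda>t. indicator {-pi..pi} t *\<^sub>R g u t)" for u
  proof -
    have "(SOME u'. axis u 1 = axis u' (1::real)) = u"
      by (rule some_equality) (auto simp: axis_eq_axis)
    then show ?thesis by (simp add: H_def)
  qed
  have Bas: "(Basis :: (real^'d) set) = (\<lambda>u. axis u 1) ` UNIV"
    by (auto simp: Basis_vec_def)
  have injax: "inj (\<lambda>u::'d. axis u (1::real))"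
    by (auto simp: inj_def axis_eq_axis)
  have prodB: "(\<Prod>b\<in>Basis. P b) = (\<Prod>u\<in>UNIV. P (axis u 1))" for P :: "real^'d \<Rightarrow> complex"
    unfolding Bas by (subst prod.reindex[OF injax]) simp
  have eqH: "(\<lambda>f. indicator C (\<Sum>b\<in>Basis. f b *\<^sub>R b) *\<^sub>R F (\<Sum>b\<in>Basis. f b *\<^sub>R b))
      = (\<lambda>f. \<Prod>b\<in>Basis. H b (f b))"
  proof
    fix f :: "real^'d \<Rightarrow> real"
    have ind: "indicator C x = (\<Prod>u\<in>UNIV. indicator {-pi..pi} (x $ u) :: real)" for x
      by (auto simp: indicator_def memC)
    have "indicator C (\<Sum>b\<in>Basis. f b *\<^sub>R b) = (\<Prod>u\<in>UNIV. indicator {-pi..pi} (f (axis u 1)) :: real)"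
      unfolding ind vec_sum_basis_nth ..
    then show "indicator C (\<Sum>b\<in>Basis. f b *\<^sub>R b) *\<^sub>R F (\<Sum>b\<in>Basis. f b *\<^sub>R b) = (\<Prod>b\<in>Basis. H b (f b))"
      unfolding F_def vec_sum_basis_nth prodB Hax
      by (simp add: prod.distrib scaleR_conv_of_real of_real_prod)
  qed
  have "integral C F = (LINT x:C|lborel. F x)"
    by (rule set_borel_integral_eq_integral(2)[OF si, symmetric])
  also have "\<dots> = (\<integral>x. indicator C x *\<^sub>R F x \<partial>lborel)"
    by (simp add: set_lebesgue_integral_def)
  also have "\<dots> = (\<integral>x. indicator C x *\<^sub>R F x \<partial>distr (\<Pi>\<^sub>M b\<in>Basis. lborel) borel (\<lambda>f. \<Sum>b\<in>Basis. f b *\<^sub>R b))"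
    by (simp flip: lborel_eq)
  also have "\<dots> = (\<integral>f. indicator C (\<Sum>b\<in>Basis. f b *\<^sub>R b) *\<^sub>R F (\<Sum>b\<in>Basis. f b *\<^sub>R b) \<partial>(\<Pi>\<^sub>M b\<in>Basis. lborel))"
  proof (rule integral_distr)
    show "(\<lambda>x. indicator C x *\<^sub>R F x) \<in> borel_measurable borel"
      using borel_measurable_integrable[OF si[unfolded set_integrable_def]] by simp
  qed measurable
  also have "\<dots> = (\<integral>f. (\<Prod>b\<in>Basis. H b (f b)) \<partial>(\<Pi>\<^sub>M b\<in>Basis. lborel))" by (simp only: eqH)
  also have "\<dots> = (\<Prod>b\<in>Basis. integral\<^sup>L lborel (H b))"
  proof -
    interpret product_sigma_finite "\<lambda>b::real^'d. lborel :: real measure"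
      by standard
    show ?thesis
    proof (rule product_integral_prod)
      fix b :: "real^'d" assume "b \<in> Basis"
      then obtain u where b: "b = axis u 1" by (auto simp: Bas)
      show "integrable lborel (H b)"
        unfolding b Hax by (rule borel_integrable_compact[OF compact_Icc cont])
    qed simp
  qed
  also have "\<dots> = (\<Prod>u\<in>UNIV. integral {-pi..pi} (g u))"
  proof -
    have "integral\<^sup>L lborel (H (axis u 1)) = integral {-pi..pi} (g u)" for u
    proof -
      have si1: "set_integrable lborel {-pi..pi} (g u)"
        unfolding set_integrable_def by (rule borel_integrable_compact[OF compact_Icc cont])
      show ?thesis
        using set_borel_integral_eq_integral(2)[OF si1] by (simp add: Hax set_lebesgue_integral_def)
    qed
    then show ?thesis by (simp add: prodB)
  qed
  finally show ?thesis by (simp add: C_def F_def)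
qed

definition ee :: "int^'d::finite \<Rightarrow> real^'d \<Rightarrow> complex" where
  "ee h \<theta> = exp (\<i> * complex_of_real (\<Sum>u\<in>UNIV. real_of_int (h$u) * \<theta>$u))"

lemma ee_prod: "ee h \<theta> = (\<Prod>u\<in>UNIV. exp (\<i> * complex_of_real (real_of_int (h$u) * \<theta>$u)))"
  unfolding ee_def of_real_sum sum_distrib_left by (rule exp_sum) simp

lemma integral_exp_int:
  fixes n :: int
  shows "integral {-pi..pi} (\<lambda>t. exp (\<i> * complex_of_real (real_of_int n * t))) = (if n = 0 then complex_of_real (2 * pi) else 0)"
proof (cases "n = 0")
  case True
  then show ?thesis by (simp add: scaleR_conv_of_real)
next
  case False
  define a where "a = \<i> * complex_of_int n"
  have a0: "a \<noteq> 0" using False by (simp add: a_def)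
  have eqf: "(\<lambda>t. exp (\<i> * complex_of_real (real_of_int n * t))) = (\<lambda>t. exp (a * complex_of_real t))"
    by (simp add: a_def mult.assoc)
  define F where "F t = exp (a * of_real t) / a" for t
  have d: "(F has_vector_derivative exp (a * complex_of_real t)) (at t within {-pi..pi})" for t
    unfolding F_def using a0
    by (intro derivative_eq_intros has_complex_derivative_imp_has_vector_derivative [unfolded o_def] | simp)+
  have "((\<lambda>t. exp (a * complex_of_real t)) has_integral F pi - F (-pi)) {-pi..pi}"
    by (rule fundamental_theorem_of_calculus) (auto intro: d)
  moreover have "F pi = F (-pi)"
  proof -
    have "exp (a * complex_of_real pi) = cis (real_of_int n * pi)"
      by (simp add: cis_conv_exp a_def mult_ac)
    moreover have "exp (a * complex_of_real (-pi)) = cis (- (real_of_int n * pi))"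
      by (simp add: cis_conv_exp a_def mult_ac)
    moreover have "cis (real_of_int n * pi) = cis (- (real_of_int n * pi))"
      by (simp add: cis.ctr sin_zero_iff_int2)
    ultimately show ?thesis by (simp add: F_def)
  qed
  ultimately have "integral {-pi..pi} (\<lambda>t. exp (a * complex_of_real t)) = 0" by (simp add: integral_unique)
  then show ?thesis using False eqf by simp
qed

lemma integral_ee:
  fixes h :: "int^'d::finite"
  shows "integral (cbox (\<chi> _. -pi) (\<chi> _. pi)) (ee h) = (if h = 0 then (2 * pi) ^ CARD('d) else 0)"
proof -
  have "integral (cbox (\<chi> _. -pi) (\<chi> _. pi)) (ee h)
     = (\<Prod>u\<in>UNIV. integral {-pi..pi} (\<lambda>t. exp (\<i> * complex_of_real (real_of_int (h$u) * t))))"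
    unfolding ee_prod
    by (rule integral_cube_prod) (auto intro!: continuous_intros)
  also have "\<dots> = (\<Prod>u\<in>UNIV. if h$u = 0 then complex_of_real (2 * pi) else 0)"
    by (intro prod.cong refl integral_exp_int)
  also have "\<dots> = (if h = 0 then (2 * pi) ^ CARD('d) else 0)"
  proof (cases "h = 0")
    case True then show ?thesis by simp
  next
    case False
    then obtain u where "h$u \<noteq> 0" by (auto simp: vec_eq_iff)
    then have "(\<Prod>u\<in>UNIV. if h$u = 0 then complex_of_real (2 * pi) else 0) = 0"
      by (intro prod_zero) auto
    then show ?thesis using False by simp
  qed
  finally show ?thesis .
qed


definition L2 :: "'a measure \<Rightarrow> ('a \<Rightarrow> complex) \<Rightarrow> bool" where
  "L2 M U \<longleftrightarrow> U \<in> borel_measurable M \<and> integrable M (\<lambda>\<omega>. (cmod (U \<omega>))\<^sup>2)"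

lemma sq2: "(x + y)\<^sup>2 \<le> 2 * x\<^sup>2 + 2 * (y::real)\<^sup>2"
proof -
  have "2 * x\<^sup>2 + 2 * y\<^sup>2 - (x + y)\<^sup>2 = (x - y)\<^sup>2" by algebra
  moreover have "(x - y)\<^sup>2 \<ge> 0" by simp
  ultimately show ?thesis by linarith
qed

lemma L2_add:
  assumes "L2 M U" "L2 M V" shows "L2 M (\<lambda>\<omega>. U \<omega> + V \<omega>)"
proof -
  have b: "(cmod (U \<omega> + V \<omega>))\<^sup>2 \<le> 2 * (cmod (U \<omega>))\<^sup>2 + 2 * (cmod (V \<omega>))\<^sup>2" for \<omega>
  proof -
    have "cmod (U \<omega> + V \<omega>) \<le> cmod (U \<omega>) + cmod (V \<omega>)" by (rule norm_triangle_ineq)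
    then have "(cmod (U \<omega> + V \<omega>))\<^sup>2 \<le> (cmod (U \<omega>) + cmod (V \<omega>))\<^sup>2"
      by (simp add: power_mono)
    also have "\<dots> \<le> 2 * (cmod (U \<omega>))\<^sup>2 + 2 * (cmod (V \<omega>))\<^sup>2"
      using sq2[of "cmod (U \<omega>)" "cmod (V \<omega>)"] .
    finally show ?thesis .
  qed
  have mU: "U \<in> borel_measurable M" and mV: "V \<in> borel_measurable M"
    and iU: "integrable M (\<lambda>\<omega>. (cmod (U \<omega>))\<^sup>2)" and iV: "integrable M (\<lambda>\<omega>. (cmod (V \<omega>))\<^sup>2)"
    using assms by (auto simp: L2_def)
  have i2: "integrable M (\<lambda>\<omega>. 2 * (cmod (U \<omega>))\<^sup>2 + 2 * (cmod (V \<omega>))\<^sup>2)"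
    using iU iV by auto
  have "integrable M (\<lambda>\<omega>. (cmod (U \<omega> + V \<omega>))\<^sup>2)"
  proof (rule Bochner_Integration.integrable_bound[OF i2])
    show "(\<lambda>\<omega>. (cmod (U \<omega> + V \<omega>))\<^sup>2) \<in> borel_measurable M" using mU mV by measurable
    show "AE \<omega> in M. norm ((cmod (U \<omega> + V \<omega>))\<^sup>2) \<le> norm (2 * (cmod (U \<omega>))\<^sup>2 + 2 * (cmod (V \<omega>))\<^sup>2)"
      using b by (auto intro!: AE_I2 simp del: norm_power)
  qed
  then show ?thesis using mU mV by (auto simp: L2_def)
qed

lemma L2_scale: assumes "L2 M U" shows "L2 M (\<lambda>\<omega>. c * U \<omega>)"
  using assms by (auto simp: L2_def norm_mult power_mult_distrib)

lemma cnj_measurable[measurable]: "U \<in> borel_measurable M \<Longrightarrow> (\<lambda>\<omega>. cnj (U \<omega>)) \<in> borel_measurable M"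
  by (rule borel_measurable_continuous_on[of cnj]) (auto intro: continuous_intros)

lemma L2_cnj: assumes "L2 M U" shows "L2 M (\<lambda>\<omega>. cnj (U \<omega>))"
  using assms by (auto simp: L2_def)

lemma L2_zero: "L2 M (\<lambda>\<omega>. 0)"
  by (simp add: L2_def)

lemma L2_sum: assumes "\<And>k. k \<in> A \<Longrightarrow> L2 M (U k)" shows "L2 M (\<lambda>\<omega>. \<Sum>k\<in>A. U k \<omega>)"
proof (cases "finite A")
  case True
  then show ?thesis using assms
    by (induction A rule: finite_induct) (auto intro!: L2_add L2_zero)
next
  case False
  then show ?thesis by (simp add: L2_zero)
qed

lemma amgm: assumes "t > 0" shows "a * b \<le> (t * a\<^sup>2 + b\<^sup>2 / t) / (2::real)"
proof -
  have "t * a\<^sup>2 + b\<^sup>2 / t - 2 * (a * b) = (t * a - b)\<^sup>2 / t"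
    using assms by (simp add: field_simps power2_eq_square)
  moreover have "(t * a - b)\<^sup>2 / t \<ge> 0" using assms by simp
  ultimately have "2 * (a * b) \<le> t * a\<^sup>2 + b\<^sup>2 / t" by linarith
  then show ?thesis by simp
qed

lemma ab_le_sq: "0 \<le> a \<Longrightarrow> 0 \<le> b \<Longrightarrow> a * b \<le> a\<^sup>2 + (b::real)\<^sup>2"
proof -
  assume "0 \<le> a" "0 \<le> b"
  then have "0 \<le> a * b" by simp
  moreover have "a * b * 2 \<le> a\<^sup>2 + b\<^sup>2" using amgm[of 1 a b] by simp
  ultimately show ?thesis by linarith
qed

lemma L2_prod_int:
  assumes "L2 M U" "L2 M V" shows "integrable M (\<lambda>\<omega>. U \<omega> * V \<omega>)"
proof -
  have mU: "U \<in> borel_measurable M" and mV: "V \<in> borel_measurable M"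
    and iU: "integrable M (\<lambda>\<omega>. (cmod (U \<omega>))\<^sup>2)" and iV: "integrable M (\<lambda>\<omega>. (cmod (V \<omega>))\<^sup>2)"
    using assms by (auto simp: L2_def)
  have i2: "integrable M (\<lambda>\<omega>. (cmod (U \<omega>))\<^sup>2 + (cmod (V \<omega>))\<^sup>2)"
    using iU iV by auto
  show ?thesis
  proof (rule Bochner_Integration.integrable_bound[OF i2])
    show "(\<lambda>\<omega>. U \<omega> * V \<omega>) \<in> borel_measurable M" using mU mV by measurable
    have "cmod (U \<omega> * V \<omega>) \<le> (cmod (U \<omega>))\<^sup>2 + (cmod (V \<omega>))\<^sup>2" for \<omega>
      unfolding norm_mult by (rule ab_le_sq) simp_all
    then show "AE \<omega> in M. norm (U \<omega> * V \<omega>) \<le> norm ((cmod (U \<omega>))\<^sup>2 + (cmod (V \<omega>))\<^sup>2)"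
      by (auto intro!: AE_I2 simp del: norm_power)
  qed
qed

lemma L2_CS:
  assumes "L2 M U" "L2 M V" "t > 0"
  shows "cmod (\<integral>\<omega>. U \<omega> * V \<omega> \<partial>M) \<le> (t * (\<integral>\<omega>. (cmod (U \<omega>))\<^sup>2 \<partial>M) + (\<integral>\<omega>. (cmod (V \<omega>))\<^sup>2 \<partial>M) / t) / 2"
proof -
  have iU: "integrable M (\<lambda>\<omega>. (cmod (U \<omega>))\<^sup>2)" and iV: "integrable M (\<lambda>\<omega>. (cmod (V \<omega>))\<^sup>2)"
    using assms by (auto simp: L2_def)
  have "cmod (\<integral>\<omega>. U \<omega> * V \<omega> \<partial>M) \<le> (\<integral>\<omega>. (t * (cmod (U \<omega>))\<^sup>2 + (cmod (V \<omega>))\<^sup>2 / t) / 2 \<partial>M)"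
  proof (rule order.trans[OF integral_norm_bound Bochner_Integration.integral_mono])
    show "integrable M (\<lambda>\<omega>. norm (U \<omega> * V \<omega>))" by (rule integrable_norm[OF L2_prod_int[OF assms(1,2)]])
    show "integrable M (\<lambda>\<omega>. (t * (cmod (U \<omega>))\<^sup>2 + (cmod (V \<omega>))\<^sup>2 / t) / 2)"
      using iU iV by auto
    show "norm (U \<omega> * V \<omega>) \<le> (t * (cmod (U \<omega>))\<^sup>2 + (cmod (V \<omega>))\<^sup>2 / t) / 2" for \<omega>
      using amgm[OF assms(3), of "cmod (U \<omega>)" "cmod (V \<omega>)"] by (simp add: norm_mult)
  qed
  also have "\<dots> = (t * (\<integral>\<omega>. (cmod (U \<omega>))\<^sup>2 \<partial>M) + (\<integral>\<omega>. (cmod (V \<omega>))\<^sup>2 \<partial>M) / t) / 2"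
    using iU iV by simp
  finally show ?thesis .
qed

lemma L2_expand:
  assumes "finite A" "finite B" "\<And>k. k \<in> A \<Longrightarrow> L2 M (U k)" "\<And>j. j \<in> B \<Longrightarrow> L2 M (V j)"
  shows "(\<integral>\<omega>. (\<Sum>k\<in>A. U k \<omega>) * (\<Sum>j\<in>B. V j \<omega>) \<partial>M)
       = (\<Sum>k\<in>A. \<Sum>j\<in>B. (\<integral>\<omega>. U k \<omega> * V j \<omega> \<partial>M))"
proof -
  have "(\<integral>\<omega>. (\<Sum>k\<in>A. U k \<omega>) * (\<Sum>j\<in>B. V j \<omega>) \<partial>M) = (\<integral>\<omega>. (\<Sum>k\<in>A. \<Sum>j\<in>B. U k \<omega> * V j \<omega>) \<partial>M)"
    by (simp add: sum_product)
  also have "\<dots> = (\<Sum>k\<in>A. (\<integral>\<omega>. (\<Sum>j\<in>B. U k \<omega> * V j \<omega>) \<partial>M))"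
    by (rule Bochner_Integration.integral_sum) (auto intro!: L2_prod_int assms)
  also have "\<dots> = (\<Sum>k\<in>A. \<Sum>j\<in>B. (\<integral>\<omega>. U k \<omega> * V j \<omega> \<partial>M))"
    by (intro sum.cong refl Bochner_Integration.integral_sum) (auto intro!: L2_prod_int assms)
  finally show ?thesis .
qed


lemma stat_meas:
  assumes meas: "\<And>k. X k \<in> borel_measurable M" and "finite S"
  shows "(\<lambda>\<omega>. \<lambda>k\<in>S. X (k + h) \<omega>) \<in> measurable M (Pi\<^sub>M S (\<lambda>_. (borel :: complex measure)))"
  using meas by (auto intro!: measurable_restrict)

lemma stat_integral:
  fixes X :: "int^'d::finite \<Rightarrow> 'a \<Rightarrow> complex"
    and g :: "(int^'d \<Rightarrow> complex) \<Rightarrow> 'b::{banach,second_countable_topology}"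
  assumes stat: "strictly_stationary M X" and meas: "\<And>k. X k \<in> borel_measurable M" and S: "finite S"
    and g: "g \<in> borel_measurable (Pi\<^sub>M S (\<lambda>_. (borel :: complex measure)))"
  shows "(\<integral>\<omega>. g (\<lambda>k\<in>S. X (k + h) \<omega>) \<partial>M) = (\<integral>\<omega>. g (\<lambda>k\<in>S. X k \<omega>) \<partial>M)"
    and "integrable M (\<lambda>\<omega>. g (\<lambda>k\<in>S. X (k + h) \<omega>)) = integrable M (\<lambda>\<omega>. g (\<lambda>k\<in>S. X k \<omega>))"
proof -
  have d: "distr M (Pi\<^sub>M S (\<lambda>_. (borel :: complex measure))) (\<lambda>\<omega>. \<lambda>k\<in>S. X (k + h) \<omega>)
      = distr M (Pi\<^sub>M S (\<lambda>_. (borel :: complex measure))) (\<lambda>\<omega>. \<lambda>k\<in>S. X k \<omega>)"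
    using stat S unfolding strictly_stationary_def by blast
  have m1: "(\<lambda>\<omega>. \<lambda>k\<in>S. X (k + h) \<omega>) \<in> measurable M (Pi\<^sub>M S (\<lambda>_. (borel :: complex measure)))"
    by (rule stat_meas[OF meas S])
  have m0: "(\<lambda>\<omega>. \<lambda>k\<in>S. X k \<omega>) \<in> measurable M (Pi\<^sub>M S (\<lambda>_. (borel :: complex measure)))"
    using stat_meas[OF meas S, where h=0] by simp
  show "(\<integral>\<omega>. g (\<lambda>k\<in>S. X (k + h) \<omega>) \<partial>M) = (\<integral>\<omega>. g (\<lambda>k\<in>S. X k \<omega>) \<partial>M)"
    using integral_distr[OF m1 g] integral_distr[OF m0 g] d by simp
  show "integrable M (\<lambda>\<omega>. g (\<lambda>k\<in>S. X (k + h) \<omega>)) = integrable M (\<lambda>\<omega>. g (\<lambda>k\<in>S. X k \<omega>))"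
    using integrable_distr_eq[OF m1 g] integrable_distr_eq[OF m0 g] d by simp
qed

lemma stat_L2:
  fixes X :: "int^'d::finite \<Rightarrow> 'a \<Rightarrow> complex"
  assumes stat: "strictly_stationary M X" and meas: "\<And>k. X k \<in> borel_measurable M"
    and sq: "integrable M (\<lambda>\<omega>. (norm (X 0 \<omega>))\<^sup>2)"
  shows "L2 M (X k)"
proof -
  have g: "(\<lambda>x. (norm (x 0))\<^sup>2 :: real) \<in> borel_measurable (Pi\<^sub>M {0} (\<lambda>_. (borel :: complex measure)))"
    by measurable
  have "integrable M (\<lambda>\<omega>. (\<lambda>x. (norm (x 0))\<^sup>2) (\<lambda>l\<in>{0}. X (l + k) \<omega>))
      = integrable M (\<lambda>\<omega>. (\<lambda>x. (norm (x 0))\<^sup>2) (\<lambda>l\<in>{0::int^'d}. X l \<omega>))"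
    by (rule stat_integral(2)[OF stat meas _ g]) simp
  then show ?thesis using sq meas by (simp add: L2_def)
qed

lemma stat_pseudo:
  fixes X :: "int^'d::finite \<Rightarrow> 'a \<Rightarrow> complex"
  assumes stat: "strictly_stationary M X" and meas: "\<And>k. X k \<in> borel_measurable M"
  shows "(\<integral>\<omega>. X (k + h) \<omega> * X (j + h) \<omega> \<partial>M) = (\<integral>\<omega>. X k \<omega> * X j \<omega> \<partial>M)"
proof -
  have g: "(\<lambda>x. x k * x j :: complex) \<in> borel_measurable (Pi\<^sub>M {k, j} (\<lambda>_. (borel :: complex measure)))"
    by measurable
  have "(\<integral>\<omega>. (\<lambda>x. x k * x j) (\<lambda>l\<in>{k,j}. X (l + h) \<omega>) \<partial>M)
      = (\<integral>\<omega>. (\<lambda>x. x k * x j) (\<lambda>l\<in>{k,j}. X l \<omega>) \<partial>M)"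
    by (rule stat_integral(1)[OF stat meas _ g]) simp
  then show ?thesis by simp
qed


abbreviation cube :: "(real^'d::finite) set" where
  "cube \<equiv> cbox (\<chi> _. -pi) (\<chi> _. pi)"

lemma integral_of_real_HK:
  fixes g :: "'n::euclidean_space \<Rightarrow> real"
  assumes "g integrable_on S"
  shows "integral S (\<lambda>x. complex_of_real (g x)) = of_real (integral S g)"
  using has_integral_of_real[OF integrable_integral[OF assms]] by (rule integral_unique)

lemma ee_mult: "ee k \<theta> * ee j \<theta> = ee (k + j) \<theta>"
  by (simp add: ee_def sum.distrib distrib_right algebra_simps flip: exp_add)

lemma ee_cnj: "cnj (ee k \<theta>) = ee (- k) \<theta>"
  by (simp add: ee_def exp_cnj sum_negf)

lemma ee_mult_cnj: "ee k \<theta> * cnj (ee j \<theta>) = ee (k - j) \<theta>"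
  by (simp add: ee_cnj ee_mult)

lemma norm_ee [simp]: "cmod (ee k \<theta>) = 1"
  by (simp add: ee_def norm_exp_i_times)

lemma ee_zero [simp]: "ee 0 \<theta> = 1"
  by (simp add: ee_def)

lemma continuous_on_ee [continuous_intros]: "continuous_on S (ee k)"
  unfolding ee_def by (intro continuous_intros)

lemma cis_torus: "(\<chi> u. cis (\<theta>$u)) \<in> torus"
  by (simp add: torus_def)

locale specfield = prob_space M for M :: "'a measure" +
  fixes X :: "int^'d::finite \<Rightarrow> 'a \<Rightarrow> complex" and f :: "complex^'d \<Rightarrow> real"
  assumes meas: "\<And>k. X k \<in> borel_measurable M"
    and L2X: "\<And>k. L2 M (X k)"
    and spec: "is_spectral_density M X f"
    and fcont: "continuous_on torus f"
begin

definition fc :: "real^'d \<Rightarrow> real" where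
  "fc \<theta> = f (\<chi> u. cis (\<theta>$u))"

lemma fc_cont: "continuous_on S fc"
  unfolding fc_def
  by (rule continuous_on_compose2[OF fcont]) (auto intro!: continuous_intros simp: cis_torus)

lemma fc_nonneg: "fc \<theta> \<ge> 0"
  using spec cis_torus unfolding is_spectral_density_def fc_def by blast

lemma cov: "(\<integral>\<omega>. X k \<omega> * cnj (X j \<omega>) \<partial>M)
   = integral cube (\<lambda>\<theta>. ee (k - j) \<theta> * of_real (fc \<theta>)) / (2 * pi) ^ CARD('d)"
  using spec unfolding is_spectral_density_def fc_def ee_def by simp

lemma quad:
  assumes A: "finite A" and B: "finite B"
  shows "(\<integral>\<omega>. (\<Sum>k\<in>A. c k * X k \<omega>) * cnj (\<Sum>j\<in>B. d j * X j \<omega>) \<partial>M)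
     = integral cube (\<lambda>\<theta>. (\<Sum>k\<in>A. c k * ee k \<theta>) * cnj (\<Sum>j\<in>B. d j * ee j \<theta>) * of_real (fc \<theta>)) / (2 * pi) ^ CARD('d)"
proof -
  have "(\<integral>\<omega>. (\<Sum>k\<in>A. c k * X k \<omega>) * cnj (\<Sum>j\<in>B. d j * X j \<omega>) \<partial>M)
      = (\<integral>\<omega>. (\<Sum>k\<in>A. c k * X k \<omega>) * (\<Sum>j\<in>B. cnj (d j) * cnj (X j \<omega>)) \<partial>M)"
    by simp
  also have "\<dots> = (\<Sum>k\<in>A. \<Sum>j\<in>B. (\<integral>\<omega>. (c k * X k \<omega>) * (cnj (d j) * cnj (X j \<omega>)) \<partial>M))"
    by (rule L2_expand[OF A B]) (auto intro!: L2_scale L2_cnj L2X)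
  also have "\<dots> = (\<Sum>k\<in>A. \<Sum>j\<in>B. c k * cnj (d j) * (\<integral>\<omega>. X k \<omega> * cnj (X j \<omega>) \<partial>M))"
  proof (intro sum.cong refl)
    fix k j
    have "(\<integral>\<omega>. (c k * X k \<omega>) * (cnj (d j) * cnj (X j \<omega>)) \<partial>M) = (\<integral>\<omega>. (c k * cnj (d j)) * (X k \<omega> * cnj (X j \<omega>)) \<partial>M)"
      by (simp add: ac_simps)
    also have "\<dots> = c k * cnj (d j) * (\<integral>\<omega>. X k \<omega> * cnj (X j \<omega>) \<partial>M)"
      by (rule Bochner_Integration.integral_mult_right) (auto intro!: L2_prod_int L2_cnj L2X)
    finally show "(\<integral>\<omega>. (c k * X k \<omega>) * (cnj (d j) * cnj (X j \<omega>)) \<partial>M) = c k * cnj (d j) * (\<integral>\<omega>. X k \<omega> * cnj (X j \<omega>) \<partial>M)" .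
  qed
  also have "\<dots> = (\<Sum>k\<in>A. \<Sum>j\<in>B. integral cube (\<lambda>\<theta>. c k * cnj (d j) * (ee (k - j) \<theta> * of_real (fc \<theta>)))) / (2 * pi) ^ CARD('d)"
    by (simp add: cov sum_divide_distrib)
  also have "(\<Sum>k\<in>A. \<Sum>j\<in>B. integral cube (\<lambda>\<theta>. c k * cnj (d j) * (ee (k - j) \<theta> * of_real (fc \<theta>))))
      = integral cube (\<lambda>\<theta>. (\<Sum>k\<in>A. \<Sum>j\<in>B. c k * cnj (d j) * (ee (k - j) \<theta> * of_real (fc \<theta>))))"
    apply (subst integral_sum[OF A])
     apply (intro integrable_sum B integrable_continuous continuous_intros fc_cont)
    apply (intro sum.cong refl)
    apply (subst integral_sum[OF B])
     apply (intro integrable_continuous continuous_intros fc_cont)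
    by simp
  also have "(\<lambda>\<theta>. (\<Sum>k\<in>A. \<Sum>j\<in>B. c k * cnj (d j) * (ee (k - j) \<theta> * of_real (fc \<theta>))))
      = (\<lambda>\<theta>. (\<Sum>k\<in>A. c k * ee k \<theta>) * cnj (\<Sum>j\<in>B. d j * ee j \<theta>) * of_real (fc \<theta>))"
  proof
    fix \<theta>
    have "(\<Sum>k\<in>A. c k * ee k \<theta>) * cnj (\<Sum>j\<in>B. d j * ee j \<theta>) * of_real (fc \<theta>)
       = (\<Sum>k\<in>A. \<Sum>j\<in>B. (c k * ee k \<theta>) * (cnj (d j) * cnj (ee j \<theta>)) * of_real (fc \<theta>))"
      by (simp add: cnj_sum sum_distrib_left sum_distrib_right) (rule sum.swap)
    also have "\<dots> = (\<Sum>k\<in>A. \<Sum>j\<in>B. c k * cnj (d j) * (ee (k - j) \<theta> * of_real (fc \<theta>)))"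
      by (intro sum.cong refl) (simp add: ee_mult_cnj[symmetric] ac_simps)
    finally show "(\<Sum>k\<in>A. \<Sum>j\<in>B. c k * cnj (d j) * (ee (k - j) \<theta> * of_real (fc \<theta>)))
      = (\<Sum>k\<in>A. c k * ee k \<theta>) * cnj (\<Sum>j\<in>B. d j * ee j \<theta>) * of_real (fc \<theta>)" by simp
  qed
  finally show ?thesis .
qed

lemma quad_real:
  assumes A: "finite A"
  shows "(\<integral>\<omega>. (cmod (\<Sum>k\<in>A. c k * X k \<omega>))\<^sup>2 \<partial>M)
     = integral cube (\<lambda>\<theta>. (cmod (\<Sum>k\<in>A. c k * ee k \<theta>))\<^sup>2 * fc \<theta>) / (2 * pi) ^ CARD('d)"
proof -
  have "complex_of_real (\<integral>\<omega>. (cmod (\<Sum>k\<in>A. c k * X k \<omega>))\<^sup>2 \<partial>M)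
      = (\<integral>\<omega>. (\<Sum>k\<in>A. c k * X k \<omega>) * cnj (\<Sum>k\<in>A. c k * X k \<omega>) \<partial>M)"
    by (simp only: integral_complex_of_real[symmetric] complex_norm_square)
  also have "\<dots> = integral cube (\<lambda>\<theta>. (\<Sum>k\<in>A. c k * ee k \<theta>) * cnj (\<Sum>k\<in>A. c k * ee k \<theta>) * of_real (fc \<theta>)) / (2 * pi) ^ CARD('d)"
    by (rule quad[OF A A])
  also have "(\<lambda>\<theta>. (\<Sum>k\<in>A. c k * ee k \<theta>) * cnj (\<Sum>k\<in>A. c k * ee k \<theta>) * of_real (fc \<theta>))
      = (\<lambda>\<theta>. complex_of_real ((cmod (\<Sum>k\<in>A. c k * ee k \<theta>))\<^sup>2 * fc \<theta>))"
    by (simp only: of_real_mult complex_norm_square)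
  also have "integral cube (\<lambda>\<theta>. complex_of_real ((cmod (\<Sum>k\<in>A. c k * ee k \<theta>))\<^sup>2 * fc \<theta>))
      = of_real (integral cube (\<lambda>\<theta>. (cmod (\<Sum>k\<in>A. c k * ee k \<theta>))\<^sup>2 * fc \<theta>))"
    by (intro integral_of_real_HK integrable_continuous continuous_intros fc_cont)
  finally show ?thesis
    by (metis (no_types, lifting) of_real_eq_iff of_real_divide of_real_numeral of_real_power of_real_mult)
qed

end

lemma orth_sum:
  fixes c :: "int^'d::finite \<Rightarrow> complex"
  assumes A: "finite A"
  shows "integral cube (\<lambda>\<theta>::real^'d. (cmod (\<Sum>k\<in>A. c k * ee k \<theta>))\<^sup>2) = (2 * pi) ^ CARD('d) * (\<Sum>k\<in>A. (cmod (c k))\<^sup>2)"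
proof -
  have int: "(\<lambda>\<theta>::real^'d. c k * cnj (c j) * ee (k - j) \<theta>) integrable_on cube" for k j
    by (intro integrable_continuous continuous_intros)
  have "complex_of_real (integral cube (\<lambda>\<theta>::real^'d. (cmod (\<Sum>k\<in>A. c k * ee k \<theta>))\<^sup>2))
      = integral cube (\<lambda>\<theta>::real^'d. complex_of_real ((cmod (\<Sum>k\<in>A. c k * ee k \<theta>))\<^sup>2))"
    by (rule integral_of_real_HK[symmetric]) (intro integrable_continuous continuous_intros)
  also have "\<dots> = integral cube (\<lambda>\<theta>::real^'d. \<Sum>k\<in>A. \<Sum>j\<in>A. c k * cnj (c j) * ee (k - j) \<theta>)"
  proof (rule arg_cong[where f="integral cube"], rule ext)
    fix \<theta> :: "real^'d"
    have "complex_of_real ((cmod (\<Sum>k\<in>A. c k * ee k \<theta>))\<^sup>2) = (\<Sum>k\<in>A. c k * ee k \<theta>) * cnj (\<Sum>k\<in>A. c k * ee k \<theta>)"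
      by (simp only: complex_norm_square)
    also have "\<dots> = (\<Sum>k\<in>A. \<Sum>j\<in>A. (c k * ee k \<theta>) * (cnj (c j) * cnj (ee j \<theta>)))"
      by (simp add: cnj_sum sum_distrib_left sum_distrib_right) (rule sum.swap)
    also have "\<dots> = (\<Sum>k\<in>A. \<Sum>j\<in>A. c k * cnj (c j) * ee (k - j) \<theta>)"
      by (intro sum.cong refl) (simp add: ee_mult_cnj[symmetric] ac_simps)
    finally show "complex_of_real ((cmod (\<Sum>k\<in>A. c k * ee k \<theta>))\<^sup>2) = (\<Sum>k\<in>A. \<Sum>j\<in>A. c k * cnj (c j) * ee (k - j) \<theta>)" .
  qed
  also have "\<dots> = (\<Sum>k\<in>A. \<Sum>j\<in>A. c k * cnj (c j) * integral cube (ee (k - j) :: real^'d \<Rightarrow> complex))"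
    using A int by (simp add: integral_sum integrable_sum)
  also have "\<dots> = (\<Sum>k\<in>A. c k * cnj (c k) * (2 * pi) ^ CARD('d))"
  proof (intro sum.cong refl)
    fix k assume k: "k \<in> A"
    show "(\<Sum>j\<in>A. c k * cnj (c j) * integral cube (ee (k - j) :: real^'d \<Rightarrow> complex)) = c k * cnj (c k) * (2 * pi) ^ CARD('d)"
      using A k by (subst sum.remove[of _ k]) (auto simp: integral_ee eq_iff_diff_eq_0[symmetric] split: if_splits intro!: sum.neutral)
  qed
  also have "\<dots> = complex_of_real ((2 * pi) ^ CARD('d) * (\<Sum>k\<in>A. (cmod (c k))\<^sup>2))"
    by (simp add: sum_distrib_left sum_distrib_right ac_simps flip: complex_norm_square)
  finally show ?thesis by (simp only: of_real_eq_iff)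
qed

context specfield begin

lemma quad_bound:
  assumes A: "finite A" and Mf: "\<And>z. z \<in> torus \<Longrightarrow> f z \<le> Mf"
  shows "(\<integral>\<omega>. (cmod (\<Sum>k\<in>A. c k * X k \<omega>))\<^sup>2 \<partial>M) \<le> Mf * (\<Sum>k\<in>A. (cmod (c k))\<^sup>2)"
proof -
  have "integral cube (\<lambda>\<theta>. (cmod (\<Sum>k\<in>A. c k * ee k \<theta>))\<^sup>2 * fc \<theta>)
      \<le> integral cube (\<lambda>\<theta>. Mf * (cmod (\<Sum>k\<in>A. c k * ee k \<theta>))\<^sup>2)"
  proof (rule integral_le)
    show "(\<lambda>\<theta>. (cmod (\<Sum>k\<in>A. c k * ee k \<theta>))\<^sup>2 * fc \<theta>) integrable_on cube"
      by (intro integrable_continuous continuous_intros fc_cont)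
    show "(\<lambda>\<theta>. Mf * (cmod (\<Sum>k\<in>A. c k * ee k \<theta>))\<^sup>2) integrable_on cube"
      by (intro integrable_continuous continuous_intros)
    show "(cmod (\<Sum>k\<in>A. c k * ee k \<theta>))\<^sup>2 * fc \<theta> \<le> Mf * (cmod (\<Sum>k\<in>A. c k * ee k \<theta>))\<^sup>2" for \<theta>
      using mult_right_mono[OF Mf[OF cis_torus[of \<theta>]] zero_le_power2[of "cmod (\<Sum>k\<in>A. c k * ee k \<theta>)"]]
      by (simp add: fc_def mult.commute)
  qed
  also have "\<dots> = Mf * ((2 * pi) ^ CARD('d) * (\<Sum>k\<in>A. (cmod (c k))\<^sup>2))"
    by (simp add: orth_sum[OF A])
  finally show ?thesis
    by (simp add: quad_real[OF A] divide_le_eq mult_ac)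
qed

end

definition boxset :: "('d::finite \<Rightarrow> int set) \<Rightarrow> (int^'d) set" where
  "boxset I = {k. \<forall>u. k$u \<in> I u}"

lemma bij_boxset: "bij_betw vec_nth (boxset I) (Pi\<^sub>E UNIV I)"
proof (rule bij_betw_byWitness[where f'=vec_lambda])
  show "\<forall>a\<in>boxset I. vec_lambda (vec_nth a) = a" by simp
  show "\<forall>a'\<in>Pi\<^sub>E UNIV I. vec_nth (vec_lambda a') = a'" by (simp add: vec_lambda_inverse)
  show "vec_nth ` boxset I \<subseteq> Pi\<^sub>E UNIV I" by (auto simp: boxset_def)
  show "vec_lambda ` Pi\<^sub>E UNIV I \<subseteq> boxset I" by (auto simp: boxset_def)
qed

lemma card_boxset: "card (boxset I) = (\<Prod>u\<in>UNIV. card (I u))"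
  using bij_betw_same_card[OF bij_boxset[of I]] by (simp add: card_PiE)

lemma finite_boxset: "(\<And>u. finite (I u)) \<Longrightarrow> finite (boxset I)"
  using bij_betw_finite[OF bij_boxset[of I]] by (simp add: finite_PiE)

lemma block_boxset: "block v w = boxset (\<lambda>u. {w$u + 1 .. w$u + int (v$u)})"
proof -
  have "k \<in> block v w \<longleftrightarrow> (\<forall>u. w$u + 1 \<le> k$u \<and> k$u \<le> w$u + int (v$u))" for k
  proof
    assume "k \<in> block v w"
    then show "\<forall>u. w$u + 1 \<le> k$u \<and> k$u \<le> w$u + int (v$u)" by (auto simp: block_def)
  next
    assume a: "\<forall>u. w$u + 1 \<le> k$u \<and> k$u \<le> w$u + int (v$u)"
    have "\<forall>u. 1 \<le> (k - w)$u \<and> (k - w)$u \<le> int (v$u)"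
    proof
      fix u
      from a have "w$u + 1 \<le> k$u" "k$u \<le> w$u + int (v$u)" by auto
      then show "1 \<le> (k - w)$u \<and> (k - w)$u \<le> int (v$u)" by simp
    qed
    then show "k \<in> block v w" unfolding block_def
      by (intro CollectI exI[of _ "k - w"]) simp
  qed
  then show ?thesis by (auto simp: boxset_def)
qed

lemma finite_block [simp]: "finite (block v w)"
  by (simp add: block_boxset finite_boxset)

lemma card_block: "card (block v w) = (\<Prod>u\<in>UNIV. v$u)"
  by (simp add: block_boxset card_boxset)

lemma block_shift: "block v w = (\<lambda>k. k + w) ` block v 0"
  by (auto simp: block_def image_def)

lemma mem_block: "k \<in> block v w \<longleftrightarrow> (\<forall>u. w$u + 1 \<le> k$u \<and> k$u \<le> w$u + int (v$u))"
  by (simp add: block_boxset boxset_def)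

lemma mem_block_split:
  "k \<in> block v w \<longleftrightarrow> (\<forall>u. u \<noteq> s \<longrightarrow> w$u + 1 \<le> k$u \<and> k$u \<le> w$u + int (v$u))
      \<and> w$s + 1 \<le> k$s \<and> k$s \<le> w$s + int (v$s)"
  unfolding mem_block by metis

lemma slab1:
  fixes v :: "nat^'d::finite"
  assumes "v$s \<ge> 1"
  shows "block v (w + axis s 1) - block v w
     = boxset (\<lambda>u. if u = s then {w$s + int (v$s) + 1} else {w$u + 1 .. w$u + int (v$u)})"
proof -
  have e: "(w + axis s 1)$u = w$u + (if u = s then 1 else 0)" for u
    by (simp add: axis_def)
  show ?thesis
  proof (rule set_eqI)
    fix k
    define P where "P = (\<forall>u. u \<noteq> s \<longrightarrow> w$u + 1 \<le> k$u \<and> k$u \<le> w$u + int (v$u))"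
    have B': "k \<in> block v (w + axis s 1) \<longleftrightarrow> P \<and> w$s + 2 \<le> k$s \<and> k$s \<le> w$s + int (v$s) + 1"
      unfolding mem_block_split[of _ _ _ s] P_def e by auto
    have B: "k \<in> block v w \<longleftrightarrow> P \<and> w$s + 1 \<le> k$s \<and> k$s \<le> w$s + int (v$s)"
      unfolding mem_block_split[of _ _ _ s] P_def by auto
    have R: "k \<in> boxset (\<lambda>u. if u = s then {w$s + int (v$s) + 1} else {w$u + 1 .. w$u + int (v$u)}) \<longleftrightarrow> P \<and> k$s = w$s + int (v$s) + 1"
      unfolding boxset_def P_def by (auto split: if_splits)
    show "k \<in> block v (w + axis s 1) - block v w \<longleftrightarrow> k \<in> boxset (\<lambda>u. if u = s then {w$s + int (v$s) + 1} else {w$u + 1 .. w$u + int (v$u)})"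
      unfolding Diff_iff B' B R using assms by auto
  qed
qed

lemma slab2:
  fixes v :: "nat^'d::finite"
  assumes "v$s \<ge> 1"
  shows "block v w - block v (w + axis s 1)
     = boxset (\<lambda>u. if u = s then {w$s + 1} else {w$u + 1 .. w$u + int (v$u)})"
proof -
  have e: "(w + axis s 1)$u = w$u + (if u = s then 1 else 0)" for u
    by (simp add: axis_def)
  show ?thesis
  proof (rule set_eqI)
    fix k
    define P where "P = (\<forall>u. u \<noteq> s \<longrightarrow> w$u + 1 \<le> k$u \<and> k$u \<le> w$u + int (v$u))"
    have B': "k \<in> block v (w + axis s 1) \<longleftrightarrow> P \<and> w$s + 2 \<le> k$s \<and> k$s \<le> w$s + int (v$s) + 1"
      unfolding mem_block_split[of _ _ _ s] P_def e by auto
    have B: "k \<in> block v w \<longleftrightarrow> P \<and> w$s + 1 \<le> k$s \<and> k$s \<le> w$s + int (v$s)"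
      unfolding mem_block_split[of _ _ _ s] P_def by auto
    have R: "k \<in> boxset (\<lambda>u. if u = s then {w$s + 1} else {w$u + 1 .. w$u + int (v$u)}) \<longleftrightarrow> P \<and> k$s = w$s + 1"
      unfolding boxset_def P_def by (auto split: if_splits)
    show "k \<in> block v w - block v (w + axis s 1) \<longleftrightarrow> k \<in> boxset (\<lambda>u. if u = s then {w$s + 1} else {w$u + 1 .. w$u + int (v$u)})"
      unfolding Diff_iff B' B R using assms by auto
  qed
qed

lemma card_slab:
  fixes v :: "nat^'d::finite"
  shows "card (boxset (\<lambda>u. if u = s then {c} else {w$u + 1 .. w$u + int (v$u)})) = (\<Prod>u\<in>UNIV-{s}. v$u)"
  unfolding card_boxset by (subst prod.remove[of _ s]) (auto intro!: prod.cong)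

lemma real_card_slab:
  fixes v :: "nat^'d::finite"
  assumes "v$s \<ge> 1"
  shows "real (card (boxset (\<lambda>u. if u = s then {c} else {w$u + 1 .. w$u + int (v$u)}))) = real (\<Prod>u\<in>UNIV. v$u) / real (v$s)"
  using assms unfolding card_slab by (subst (2) prod.remove[of _ s]) auto


definition tw :: "real^'d::finite \<Rightarrow> int^'d \<Rightarrow> complex" where
  "tw \<mu> k = exp (- \<i> * complex_of_real (\<Sum>u\<in>UNIV. real_of_int (k$u) * \<mu>$u))"

lemma twisted_sum_tw: "twisted_sum X \<mu> S \<omega> = (\<Sum>k\<in>S. tw \<mu> k * X k \<omega>)"
  by (simp add: twisted_sum_def tw_def)

lemma tw_add: "tw \<mu> (k + j) = tw \<mu> k * tw \<mu> j"
  by (simp add: tw_def sum.distrib distrib_right algebra_simps flip: exp_add)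

lemma norm_tw [simp]: "cmod (tw \<mu> k) = 1"
proof -
  have "tw \<mu> k = exp (\<i> * complex_of_real (- (\<Sum>u\<in>UNIV. real_of_int (k$u) * \<mu>$u)))"
    by (simp add: tw_def)
  then show ?thesis by (simp only: norm_exp_i_times)
qed

lemma sum_diff_sets:
  assumes "finite A" "finite B"
  shows "(\<Sum>k\<in>A. g k) - (\<Sum>k\<in>B. g k) = (\<Sum>k\<in>A - B. g k) - (\<Sum>k\<in>B - A. (g k :: complex))"
proof -
  have "(\<Sum>k\<in>A. g k) = (\<Sum>k\<in>A - B. g k) + (\<Sum>k\<in>A \<inter> B. g k)"
    using sum.Int_Diff[OF assms(1), of g B] by simp
  moreover have "(\<Sum>k\<in>B. g k) = (\<Sum>k\<in>B - A. g k) + (\<Sum>k\<in>A \<inter> B. g k)"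
    using sum.Int_Diff[OF assms(2), of g A] by (simp add: Int_commute)
  ultimately show ?thesis by simp
qed

lemma phi_sum:
  assumes "\<And>a b. \<phi> (a + b) = \<phi> a + \<phi> b" "\<phi> 0 = 0"
  shows "\<phi> (\<Sum>k\<in>A. g k) = (\<Sum>k\<in>A. \<phi> (g k))"
proof (cases "finite A")
  case True then show ?thesis by (induction A rule: finite_induct) (auto simp: assms)
qed (simp add: assms)

lemma block_shift_e: "block v (w + e) = (\<lambda>k. k + e) ` block v w"
  unfolding block_shift[of v "w + e"] block_shift[of v w] image_image by (simp add: add.assoc)

lemma L2_twisted:
  assumes "\<And>k. L2 M (X k)" shows "L2 M (twisted_sum X \<mu> S)"
  unfolding twisted_sum_def by (intro L2_sum L2_scale assms)

lemma shift_identity: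
  fixes X :: "int^'d::finite \<Rightarrow> 'a \<Rightarrow> complex"
  assumes L2X: "\<And>k. L2 M (X k)"
    and phm: "\<And>a b. \<phi> (a * b) = \<phi> a * \<phi> b" and pha: "\<And>a b. \<phi> (a + b) = \<phi> a + \<phi> b" and ph0: "\<phi> 0 = 0"
    and phL2: "\<And>U. L2 M U \<Longrightarrow> L2 M (\<lambda>\<omega>. \<phi> (U \<omega>))"
    and inv: "\<And>k j. (\<integral>\<omega>. X (k + e) \<omega> * \<phi> (X (j + e) \<omega>) \<partial>M) = (\<integral>\<omega>. X k \<omega> * \<phi> (X j \<omega>) \<partial>M)"
  shows "(\<integral>\<omega>. twisted_sum X \<mu> (block v (w + e)) \<omega> * \<phi> (twisted_sum X \<mu>' (block v (w + e)) \<omega>) \<partial>M)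
       = tw \<mu> e * \<phi> (tw \<mu>' e) * (\<integral>\<omega>. twisted_sum X \<mu> (block v w) \<omega> * \<phi> (twisted_sum X \<mu>' (block v w) \<omega>) \<partial>M)"
proof -
  let ?B = "block v w"
  have inj: "inj_on (\<lambda>k. k + e) ?B" by (auto simp: inj_on_def)
  have int1: "integrable M (\<lambda>\<omega>. X k \<omega> * \<phi> (X j \<omega>))" for k j
    by (intro L2_prod_int L2X phL2)
  have re: "twisted_sum X \<mu> (block v (w + e)) \<omega> = (\<Sum>k\<in>?B. tw \<mu> (k + e) * X (k + e) \<omega>)" for \<mu> \<omega>
    unfolding twisted_sum_tw block_shift_e by (simp add: sum.reindex[OF inj])
  have "(\<integral>\<omega>. twisted_sum X \<mu> (block v (w + e)) \<omega> * \<phi> (twisted_sum X \<mu>' (block v (w + e)) \<omega>) \<partial>M)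
      = (\<integral>\<omega>. (\<Sum>k\<in>?B. tw \<mu> (k + e) * X (k + e) \<omega>) * (\<Sum>j\<in>?B. \<phi> (tw \<mu>' (j + e)) * \<phi> (X (j + e) \<omega>)) \<partial>M)"
    unfolding re by (simp add: phi_sum[OF pha ph0] phm)
  also have "\<dots> = (\<Sum>k\<in>?B. \<Sum>j\<in>?B. (\<integral>\<omega>. (tw \<mu> (k + e) * X (k + e) \<omega>) * (\<phi> (tw \<mu>' (j + e)) * \<phi> (X (j + e) \<omega>)) \<partial>M))"
    by (rule L2_expand) (auto intro!: L2_scale L2X phL2)
  also have "\<dots> = (\<Sum>k\<in>?B. \<Sum>j\<in>?B. tw \<mu> e * \<phi> (tw \<mu>' e) * (tw \<mu> k * \<phi> (tw \<mu>' j) * (\<integral>\<omega>. X k \<omega> * \<phi> (X j \<omega>) \<partial>M)))"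
  proof (intro sum.cong refl)
    fix k j
    have "(\<integral>\<omega>. (tw \<mu> (k + e) * X (k + e) \<omega>) * (\<phi> (tw \<mu>' (j + e)) * \<phi> (X (j + e) \<omega>)) \<partial>M)
        = (\<integral>\<omega>. (tw \<mu> (k + e) * \<phi> (tw \<mu>' (j + e))) * (X (k + e) \<omega> * \<phi> (X (j + e) \<omega>)) \<partial>M)"
      by (simp add: ac_simps)
    also have "\<dots> = tw \<mu> (k + e) * \<phi> (tw \<mu>' (j + e)) * (\<integral>\<omega>. X (k + e) \<omega> * \<phi> (X (j + e) \<omega>) \<partial>M)"
      using int1 by (rule Bochner_Integration.integral_mult_right)
    also have "\<dots> = tw \<mu> e * \<phi> (tw \<mu>' e) * (tw \<mu> k * \<phi> (tw \<mu>' j) * (\<integral>\<omega>. X k \<omega> * \<phi> (X j \<omega>) \<partial>M))"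
      by (simp only: inv tw_add phm) (simp add: ac_simps)
    finally show "(\<integral>\<omega>. (tw \<mu> (k + e) * X (k + e) \<omega>) * (\<phi> (tw \<mu>' (j + e)) * \<phi> (X (j + e) \<omega>)) \<partial>M)
        = tw \<mu> e * \<phi> (tw \<mu>' e) * (tw \<mu> k * \<phi> (tw \<mu>' j) * (\<integral>\<omega>. X k \<omega> * \<phi> (X j \<omega>) \<partial>M))" .
  qed
  also have "\<dots> = tw \<mu> e * \<phi> (tw \<mu>' e) * (\<Sum>k\<in>?B. \<Sum>j\<in>?B. (\<integral>\<omega>. (tw \<mu> k * X k \<omega>) * (\<phi> (tw \<mu>' j) * \<phi> (X j \<omega>)) \<partial>M))"
  proof -
    have "(\<integral>\<omega>. (tw \<mu> k * X k \<omega>) * (\<phi> (tw \<mu>' j) * \<phi> (X j \<omega>)) \<partial>M) = tw \<mu> k * \<phi> (tw \<mu>' j) * (\<integral>\<omega>. X k \<omega> * \<phi> (X j \<omega>) \<partial>M)" for k j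
    proof -
      have "(\<integral>\<omega>. (tw \<mu> k * X k \<omega>) * (\<phi> (tw \<mu>' j) * \<phi> (X j \<omega>)) \<partial>M) = (\<integral>\<omega>. (tw \<mu> k * \<phi> (tw \<mu>' j)) * (X k \<omega> * \<phi> (X j \<omega>)) \<partial>M)"
        by (simp add: ac_simps)
      also have "\<dots> = tw \<mu> k * \<phi> (tw \<mu>' j) * (\<integral>\<omega>. X k \<omega> * \<phi> (X j \<omega>) \<partial>M)"
        using int1 by (rule Bochner_Integration.integral_mult_right)
      finally show ?thesis .
    qed
    then show ?thesis by (simp add: sum_distrib_left)
  qed
  also have "(\<Sum>k\<in>?B. \<Sum>j\<in>?B. (\<integral>\<omega>. (tw \<mu> k * X k \<omega>) * (\<phi> (tw \<mu>' j) * \<phi> (X j \<omega>)) \<partial>M))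
      = (\<integral>\<omega>. twisted_sum X \<mu> ?B \<omega> * \<phi> (twisted_sum X \<mu>' ?B \<omega>) \<partial>M)"
    unfolding twisted_sum_tw phi_sum[OF pha ph0] phm
    by (rule L2_expand[symmetric]) (auto intro!: L2_scale L2X phL2)
  finally show ?thesis .
qed


context specfield begin

lemma tw_bound:
  assumes S: "finite S" and Mf: "\<And>z. z \<in> torus \<Longrightarrow> f z \<le> Mf"
  shows "(\<integral>\<omega>. (cmod (twisted_sum X \<mu> S \<omega>))\<^sup>2 \<partial>M) \<le> Mf * real (card S)"
  using quad_bound[OF S Mf, of "tw \<mu>"] unfolding twisted_sum_tw by simp

lemma diff_bound:
  fixes v :: "nat^'d"
  assumes Mf: "\<And>z. z \<in> torus \<Longrightarrow> f z \<le> Mf" and vs: "v$s \<ge> 1"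
  shows "(\<integral>\<omega>. (cmod (twisted_sum X \<mu> (block v (w + axis s 1)) \<omega> - twisted_sum X \<mu> (block v w) \<omega>))\<^sup>2 \<partial>M)
     \<le> 4 * Mf * real (\<Prod>u\<in>UNIV. v$u) / real (v$s)"
proof -
  let ?B' = "block v (w + axis s 1)" and ?B = "block v w"
  define U1 where "U1 = twisted_sum X \<mu> (?B' - ?B)"
  define U2 where "U2 = twisted_sum X \<mu> (?B - ?B')"
  have eq: "twisted_sum X \<mu> ?B' \<omega> - twisted_sum X \<mu> ?B \<omega> = U1 \<omega> - U2 \<omega>" for \<omega>
    unfolding U1_def U2_def twisted_sum_def by (rule sum_diff_sets) simp_all
  have L1: "L2 M U1" and L2': "L2 M U2" unfolding U1_def U2_def by (intro L2_twisted L2X)+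
  have i1: "integrable M (\<lambda>\<omega>. (cmod (U1 \<omega>))\<^sup>2)" and i2: "integrable M (\<lambda>\<omega>. (cmod (U2 \<omega>))\<^sup>2)"
    using L1 L2' by (auto simp: L2_def)
  have "(\<integral>\<omega>. (cmod (twisted_sum X \<mu> ?B' \<omega> - twisted_sum X \<mu> ?B \<omega>))\<^sup>2 \<partial>M)
      = (\<integral>\<omega>. (cmod (U1 \<omega> - U2 \<omega>))\<^sup>2 \<partial>M)" by (simp add: eq)
  also have "\<dots> \<le> (\<integral>\<omega>. 2 * (cmod (U1 \<omega>))\<^sup>2 + 2 * (cmod (U2 \<omega>))\<^sup>2 \<partial>M)"
  proof (rule Bochner_Integration.integral_mono)
    show "integrable M (\<lambda>\<omega>. (cmod (U1 \<omega> - U2 \<omega>))\<^sup>2)"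
      using L2_add[OF L1 L2_scale[OF L2', of "-1"]] by (simp add: L2_def)
    show "integrable M (\<lambda>\<omega>. 2 * (cmod (U1 \<omega>))\<^sup>2 + 2 * (cmod (U2 \<omega>))\<^sup>2)" using i1 i2 by simp
    show "(cmod (U1 \<omega> - U2 \<omega>))\<^sup>2 \<le> 2 * (cmod (U1 \<omega>))\<^sup>2 + 2 * (cmod (U2 \<omega>))\<^sup>2" for \<omega>
      using sq2[of "cmod (U1 \<omega>)" "cmod (U2 \<omega>)"] norm_triangle_ineq4[of "U1 \<omega>" "U2 \<omega>"]
      by (smt (verit) norm_ge_zero power_mono)
  qed
  also have "\<dots> = 2 * (\<integral>\<omega>. (cmod (U1 \<omega>))\<^sup>2 \<partial>M) + 2 * (\<integral>\<omega>. (cmod (U2 \<omega>))\<^sup>2 \<partial>M)"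
    using i1 i2 by simp
  also have "\<dots> \<le> 2 * (Mf * real (card (?B' - ?B))) + 2 * (Mf * real (card (?B - ?B')))"
    unfolding U1_def U2_def by (intro add_mono mult_left_mono tw_bound Mf) auto
  also have "\<dots> = 4 * Mf * real (\<Prod>u\<in>UNIV. v$u) / real (v$s)"
    unfolding slab1[OF vs] slab2[OF vs] real_card_slab[OF vs] by simp
  finally show ?thesis .
qed

lemma CS_sqrt_bound:
  assumes "L2 M U" "L2 M V" "r > 0" "(\<integral>\<omega>. (cmod (U \<omega>))\<^sup>2 \<partial>M) \<le> a / r\<^sup>2" "(\<integral>\<omega>. (cmod (V \<omega>))\<^sup>2 \<partial>M) \<le> b"
  shows "cmod (\<integral>\<omega>. U \<omega> * V \<omega> \<partial>M) \<le> (a + b) / (2 * r)"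
proof -
  have "cmod (\<integral>\<omega>. U \<omega> * V \<omega> \<partial>M) \<le> (r * (\<integral>\<omega>. (cmod (U \<omega>))\<^sup>2 \<partial>M) + (\<integral>\<omega>. (cmod (V \<omega>))\<^sup>2 \<partial>M) / r) / 2"
    by (rule L2_CS[OF assms(1-3)])
  also have "\<dots> \<le> (r * (a / r\<^sup>2) + b / r) / 2"
    using assms(3-5) by (intro divide_right_mono add_mono mult_left_mono) auto
  also have "\<dots> = (a + b) / (2 * r)"
    using assms(3) by (simp add: field_simps power2_eq_square)
  finally show ?thesis .
qed

lemma shift_bound:
  fixes v :: "nat^'d"
  assumes phm: "\<And>a b. \<phi> (a * b) = \<phi> a * \<phi> b" and pha: "\<And>a b. \<phi> (a + b) = \<phi> a + \<phi> b" and ph0: "\<phi> 0 = 0"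
    and phL2: "\<And>U. L2 M U \<Longrightarrow> L2 M (\<lambda>\<omega>. \<phi> (U \<omega>))" and phn: "\<And>z. cmod (\<phi> z) = cmod z"
    and inv: "\<And>k j. (\<integral>\<omega>. X (k + axis s 1) \<omega> * \<phi> (X (j + axis s 1) \<omega>) \<partial>M) = (\<integral>\<omega>. X k \<omega> * \<phi> (X j \<omega>) \<partial>M)"
    and Mf: "\<And>z. z \<in> torus \<Longrightarrow> f z \<le> Mf" and Mf0: "Mf \<ge> 0" and vs: "v$s \<ge> 1"
  shows "cmod (tw \<mu> (axis s 1) * \<phi> (tw \<mu>' (axis s 1)) - 1)
       * cmod (\<integral>\<omega>. twisted_sum X \<mu> (block v w) \<omega> * \<phi> (twisted_sum X \<mu>' (block v w) \<omega>) \<partial>M)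
     \<le> 5 * Mf * real (\<Prod>u\<in>UNIV. v$u) / sqrt (real (v$s))"
proof -
  define e where "e = (axis s 1 :: int^'d)"
  define V where "V = real (\<Prod>u\<in>UNIV. v$u)"
  define r where "r = sqrt (real (v$s))"
  have r0: "r > 0" using vs by (simp add: r_def)
  have r2: "r\<^sup>2 = real (v$s)" by (simp add: r_def)
  define S1 where "S1 = twisted_sum X \<mu> (block v w)"
  define S1' where "S1' = twisted_sum X \<mu> (block v (w + e))"
  define S2 where "S2 = twisted_sum X \<mu>' (block v w)"
  define S2' where "S2' = twisted_sum X \<mu>' (block v (w + e))"
  have L: "L2 M S1" "L2 M S1'" "L2 M S2" "L2 M S2'"
    unfolding S1_def S1'_def S2_def S2'_def by (intro L2_twisted L2X)+
  have Ld1: "L2 M (\<lambda>\<omega>. S1' \<omega> - S1 \<omega>)" and Ld2: "L2 M (\<lambda>\<omega>. S2' \<omega> - S2 \<omega>)"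
    using L2_add[OF L(2) L2_scale[OF L(1), of "-1"]] L2_add[OF L(4) L2_scale[OF L(3), of "-1"]] by simp_all
  have phd: "\<phi> (a - b) = \<phi> a - \<phi> b" for a b
    using pha[of "a - b" b] by (simp add: algebra_simps)
  have inv': "(\<integral>\<omega>. X (k + e) \<omega> * \<phi> (X (j + e) \<omega>) \<partial>M) = (\<integral>\<omega>. X k \<omega> * \<phi> (X j \<omega>) \<partial>M)" for k j
    unfolding e_def by (rule inv)
  define \<alpha> where "\<alpha> = tw \<mu> e * \<phi> (tw \<mu>' e)"
  define P where "P = (\<integral>\<omega>. S1 \<omega> * \<phi> (S2 \<omega>) \<partial>M)"
  have shift: "(\<integral>\<omega>. S1' \<omega> * \<phi> (S2' \<omega>) \<partial>M) = \<alpha> * P"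
    unfolding S1'_def S2'_def \<alpha>_def P_def S1_def S2_def
    by (rule shift_identity[where X=X and \<phi>=\<phi> and e=e and M=M, OF L2X phm pha ph0 phL2 inv'])
  have "(\<alpha> - 1) * P = (\<integral>\<omega>. S1' \<omega> * \<phi> (S2' \<omega>) \<partial>M) - (\<integral>\<omega>. S1 \<omega> * \<phi> (S2 \<omega>) \<partial>M)"
    by (simp add: shift P_def algebra_simps)
  also have "\<dots> = (\<integral>\<omega>. S1' \<omega> * \<phi> (S2' \<omega>) - S1 \<omega> * \<phi> (S2 \<omega>) \<partial>M)"
    by (rule Bochner_Integration.integral_diff[symmetric]) (intro L2_prod_int L phL2)+
  also have "\<dots> = (\<integral>\<omega>. (S1' \<omega> - S1 \<omega>) * \<phi> (S2' \<omega>) + S1 \<omega> * \<phi> (S2' \<omega> - S2 \<omega>) \<partial>M)"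
    by (simp add: phd algebra_simps)
  also have "\<dots> = (\<integral>\<omega>. (S1' \<omega> - S1 \<omega>) * \<phi> (S2' \<omega>) \<partial>M) + (\<integral>\<omega>. S1 \<omega> * \<phi> (S2' \<omega> - S2 \<omega>) \<partial>M)"
    by (rule Bochner_Integration.integral_add)
      (intro L2_prod_int L phL2 Ld1 Ld2)+
  finally have eqP: "(\<alpha> - 1) * P = (\<integral>\<omega>. (S1' \<omega> - S1 \<omega>) * \<phi> (S2' \<omega>) \<partial>M) + (\<integral>\<omega>. S1 \<omega> * \<phi> (S2' \<omega> - S2 \<omega>) \<partial>M)" .
  have d1: "(\<integral>\<omega>. (cmod (S1' \<omega> - S1 \<omega>))\<^sup>2 \<partial>M) \<le> (4 * Mf * V) / r\<^sup>2"
    unfolding S1'_def S1_def e_def V_def r2 using diff_bound[OF Mf vs] by simp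
  have d2: "(\<integral>\<omega>. (cmod (\<phi> (S2' \<omega> - S2 \<omega>)))\<^sup>2 \<partial>M) \<le> (4 * Mf * V) / r\<^sup>2"
    unfolding phn S2'_def S2_def e_def V_def r2 using diff_bound[OF Mf vs] by simp
  have b1: "(\<integral>\<omega>. (cmod (\<phi> (S2' \<omega>)))\<^sup>2 \<partial>M) \<le> Mf * V"
    unfolding phn S2'_def V_def using tw_bound[OF finite_block Mf, of \<mu>' v "w + e"] by (simp add: card_block)
  have b2: "(\<integral>\<omega>. (cmod (S1 \<omega>))\<^sup>2 \<partial>M) \<le> Mf * V"
    unfolding S1_def V_def using tw_bound[OF finite_block Mf, of \<mu> v w] by (simp add: card_block)
  have c1: "cmod (\<integral>\<omega>. (S1' \<omega> - S1 \<omega>) * \<phi> (S2' \<omega>) \<partial>M) \<le> (4 * Mf * V + Mf * V) / (2 * r)"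
    by (rule CS_sqrt_bound[OF Ld1 phL2[OF L(4)] r0 d1 b1])
  have c2: "cmod (\<integral>\<omega>. S1 \<omega> * \<phi> (S2' \<omega> - S2 \<omega>) \<partial>M) \<le> (4 * Mf * V + Mf * V) / (2 * r)"
    using CS_sqrt_bound[OF phL2[OF Ld2] L(1) r0 d2 b2] by (simp add: mult.commute)
  have "cmod ((\<alpha> - 1) * P) \<le> (4 * Mf * V + Mf * V) / (2 * r) + (4 * Mf * V + Mf * V) / (2 * r)"
    unfolding eqP by (rule order.trans[OF norm_triangle_ineq add_mono[OF c1 c2]])
  also have "\<dots> = 5 * Mf * V / r"
    by (simp add: field_simps)
  finally show ?thesis
    by (simp add: norm_mult \<alpha>_def e_def P_def S1_def S2_def V_def r_def)
qed

end

definition Kf :: "(int^'d::finite) set \<Rightarrow> real^'d \<Rightarrow> real^'d \<Rightarrow> real" where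
  "Kf B \<mu> \<theta> = (cmod (\<Sum>k\<in>B. tw \<mu> k * ee k \<theta>))\<^sup>2"

lemma tw_cnj: "cnj (tw \<mu> h) = ee h \<mu>"
  by (simp add: tw_def ee_def exp_cnj)

lemma tw_cnj_mult: "tw \<mu> k * cnj (tw \<mu> (k + h)) = ee h \<mu>"
proof -
  have "tw \<mu> k * cnj (tw \<mu> k) = 1"
    using norm_tw[of \<mu> k] by (metis complex_norm_square of_real_1 power_one)
  then show ?thesis by (simp add: tw_add tw_cnj[symmetric] mult.assoc[symmetric])
qed

lemma continuous_on_Kf [continuous_intros]: "continuous_on S (Kf B \<mu>)"
  unfolding Kf_def by (intro continuous_intros)

lemma Kf_mono_integral:
  fixes B :: "(int^'d::finite) set"
  assumes B: "finite B"
  shows "integral cube (\<lambda>\<theta>. complex_of_real (Kf B \<mu> \<theta>) * ee h \<theta>)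
       = (2 * pi) ^ CARD('d) * ee h \<mu> * of_nat (card {k\<in>B. k + h \<in> B})"
proof -
  let ?D = "complex_of_real ((2 * pi) ^ CARD('d))"
  have int: "(\<lambda>\<theta>::real^'d. tw \<mu> k * cnj (tw \<mu> j) * ee (k - j + h) \<theta>) integrable_on cube" for k j
    by (intro integrable_continuous continuous_intros)
  have "(\<lambda>\<theta>. complex_of_real (Kf B \<mu> \<theta>) * ee h \<theta>) = (\<lambda>\<theta>. \<Sum>k\<in>B. \<Sum>j\<in>B. tw \<mu> k * cnj (tw \<mu> j) * ee (k - j + h) \<theta>)"
  proof
    fix \<theta> :: "real^'d"
    have "complex_of_real (Kf B \<mu> \<theta>) = (\<Sum>k\<in>B. tw \<mu> k * ee k \<theta>) * cnj (\<Sum>k\<in>B. tw \<mu> k * ee k \<theta>)"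
      unfolding Kf_def by (simp only: complex_norm_square)
    also have "\<dots> = (\<Sum>k\<in>B. \<Sum>j\<in>B. (tw \<mu> k * ee k \<theta>) * (cnj (tw \<mu> j) * cnj (ee j \<theta>)))"
      by (simp add: cnj_sum sum_distrib_left sum_distrib_right) (rule sum.swap)
    finally have "complex_of_real (Kf B \<mu> \<theta>) * ee h \<theta> = (\<Sum>k\<in>B. \<Sum>j\<in>B. (tw \<mu> k * ee k \<theta>) * (cnj (tw \<mu> j) * cnj (ee j \<theta>)) * ee h \<theta>)"
      by (simp add: sum_distrib_right)
    also have "\<dots> = (\<Sum>k\<in>B. \<Sum>j\<in>B. tw \<mu> k * cnj (tw \<mu> j) * ee (k - j + h) \<theta>)"
      by (intro sum.cong refl) (simp add: ee_mult_cnj[symmetric] ee_mult[symmetric] ac_simps)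
    finally show "complex_of_real (Kf B \<mu> \<theta>) * ee h \<theta> = (\<Sum>k\<in>B. \<Sum>j\<in>B. tw \<mu> k * cnj (tw \<mu> j) * ee (k - j + h) \<theta>)" .
  qed
  then have "integral cube (\<lambda>\<theta>. complex_of_real (Kf B \<mu> \<theta>) * ee h \<theta>)
     = (\<Sum>k\<in>B. \<Sum>j\<in>B. tw \<mu> k * cnj (tw \<mu> j) * integral cube (ee (k - j + h) :: real^'d \<Rightarrow> complex))"
    using B int by (simp add: integral_sum integrable_sum)
  also have "\<dots> = (\<Sum>k\<in>B. if k + h \<in> B then ?D * ee h \<mu> else 0)"
  proof (intro sum.cong refl)
    fix k assume "k \<in> B"
    have "(\<Sum>j\<in>B. tw \<mu> k * cnj (tw \<mu> j) * integral cube (ee (k - j + h) :: real^'d \<Rightarrow> complex))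
        = (\<Sum>j\<in>B. if j = k + h then tw \<mu> k * cnj (tw \<mu> (k + h)) * ?D else 0)"
    proof (intro sum.cong refl)
      fix j
      have "k - j + h = 0 \<longleftrightarrow> j = k + h"
        by (auto simp: diff_add_eq right_minus_eq)
      then show "tw \<mu> k * cnj (tw \<mu> j) * integral cube (ee (k - j + h) :: real^'d \<Rightarrow> complex)
          = (if j = k + h then tw \<mu> k * cnj (tw \<mu> (k + h)) * ?D else 0)"
        by (auto simp: integral_ee)
    qed
    also have "\<dots> = (if k + h \<in> B then ?D * ee h \<mu> else 0)"
      using B by (simp add: sum.delta' tw_cnj_mult mult.commute)
    finally show "(\<Sum>j\<in>B. tw \<mu> k * cnj (tw \<mu> j) * integral cube (ee (k - j + h) :: real^'d \<Rightarrow> complex))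
       = (if k + h \<in> B then ?D * ee h \<mu> else 0)" .
  qed
  also have "\<dots> = (\<Sum>k\<in>{k\<in>B. k + h \<in> B}. ?D * ee h \<mu>)"
    by (rule sum.inter_filter[symmetric, OF B])
  also have "\<dots> = (2 * pi) ^ CARD('d) * ee h \<mu> * of_nat (card {k\<in>B. k + h \<in> B})"
    by (simp add: mult_ac)
  finally show ?thesis .
qed

lemma card_Icc_inter: "card ({1..v} \<inter> {1 - h..v - h}) = nat (v - \<bar>h\<bar>)" for v h :: int
proof -
  have "{1..v} \<inter> {1 - h..v - h} = {max 1 (1 - h) .. min v (v - h)}" by auto
  moreover have "min v (v - h) - max 1 (1 - h) + 1 = v - \<bar>h\<bar>" by (auto simp: min_def max_def abs_if)
  ultimately show ?thesis by simp
qed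

lemma card_overlap:
  fixes v :: "nat^'d::finite"
  shows "card {k\<in>block v 0. k + h \<in> block v 0} = (\<Prod>u\<in>UNIV. nat (int (v$u) - \<bar>h$u\<bar>))"
proof -
  have pt: "(1 \<le> k$u \<and> k$u \<le> int (v$u)) \<and> (1 \<le> k$u + h$u \<and> k$u + h$u \<le> int (v$u))
      \<longleftrightarrow> k$u \<in> {1..int (v$u)} \<inter> {1 - h$u .. int (v$u) - h$u}" for k u by auto
  have "{k\<in>block v 0. k + h \<in> block v 0} = boxset (\<lambda>u. {1..int (v$u)} \<inter> {1 - h$u .. int (v$u) - h$u})"
    unfolding set_eq_iff mem_Collect_eq mem_block boxset_def
    by (simp only: zero_index vector_add_component add_0 add.commute[of 0] all_conj_distrib[symmetric] pt) blast
  then show ?thesis by (simp only: card_boxset card_Icc_inter)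
qed

lemma ratio_lim:
  fixes x :: "nat \<Rightarrow> nat" and c :: int
  assumes "filterlim x at_top sequentially"
  shows "(\<lambda>n. real (nat (int (x n) - \<bar>c\<bar>)) / real (x n)) \<longlonglongrightarrow> 1"
proof -
  have ev: "eventually (\<lambda>n. x n \<ge> nat \<bar>c\<bar> + 1) sequentially"
    using assms by (simp add: filterlim_at_top)
  have xr: "filterlim (\<lambda>n. real (x n)) at_top sequentially"
    by (rule filterlim_compose[OF filterlim_real_sequentially assms])
  have "(\<lambda>n. 1 - real_of_int \<bar>c\<bar> * inverse (real (x n))) \<longlonglongrightarrow> 1 - real_of_int \<bar>c\<bar> * 0"
    by (intro tendsto_intros tendsto_inverse_0_at_top xr)
  then have l: "(\<lambda>n. 1 - real_of_int \<bar>c\<bar> * inverse (real (x n))) \<longlonglongrightarrow> 1" by simp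
  show ?thesis
  proof (rule Lim_transform_eventually[OF l])
    show "\<forall>\<^sub>F n in sequentially. 1 - real_of_int \<bar>c\<bar> * inverse (real (x n)) = real (nat (int (x n) - \<bar>c\<bar>)) / real (x n)"
      using ev
    proof eventually_elim
      case (elim n)
      then have "int (x n) - \<bar>c\<bar> \<ge> 0" "x n > 0" by auto
      then show ?case by (simp add: field_simps of_nat_diff)
    qed
  qed
qed

lemma fejer_mono_lim:
  fixes v :: "nat \<Rightarrow> nat^'d::finite" and \<mu> :: "nat \<Rightarrow> real^'d"
  assumes vlim: "\<And>u. filterlim (\<lambda>n. v n $ u) at_top sequentially" and vpos: "\<And>n u. v n $ u \<ge> 1"
    and mlim: "\<mu> \<longlonglongrightarrow> lam"
  shows "(\<lambda>n. integral cube (\<lambda>\<theta>. complex_of_real (Kf (block (v n) 0) (\<mu> n) \<theta>) * ee h \<theta>)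
           / complex_of_real ((2 * pi) ^ CARD('d) * real (\<Prod>u\<in>UNIV. v n $ u))) \<longlonglongrightarrow> ee h lam"
proof -
  have eq: "integral cube (\<lambda>\<theta>. complex_of_real (Kf (block (v n) 0) (\<mu> n) \<theta>) * ee h \<theta>)
           / complex_of_real ((2 * pi) ^ CARD('d) * real (\<Prod>u\<in>UNIV. v n $ u))
      = ee h (\<mu> n) * of_real (\<Prod>u\<in>UNIV. real (nat (int (v n $ u) - \<bar>h$u\<bar>)) / real (v n $ u))" for n
  proof -
    have pos: "real (\<Prod>u\<in>UNIV. v n $ u) \<noteq> 0" using vpos[of n] by (auto simp: prod_zero_iff Suc_le_eq)
    show ?thesis
      unfolding Kf_mono_integral[OF finite_block] card_overlap
      using pos by (simp add: prod_dividef field_simps)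
  qed
  have l1: "(\<lambda>n. ee h (\<mu> n)) \<longlonglongrightarrow> ee h lam"
    unfolding ee_def by (intro tendsto_intros mlim)
  have l2: "(\<lambda>n. \<Prod>u\<in>UNIV. real (nat (int (v n $ u) - \<bar>h$u\<bar>)) / real (v n $ u)) \<longlonglongrightarrow> (\<Prod>u\<in>(UNIV::'d set). 1)"
    by (intro tendsto_prod ratio_lim vlim)
  show ?thesis
    unfolding eq using tendsto_mult[OF l1 tendsto_of_real[OF l2]] by simp
qed


definition mono :: "int^'d::finite \<Rightarrow> complex^'d \<Rightarrow> complex" where
  "mono h z = (\<Prod>u\<in>UNIV. (z$u) powi (h$u))"

inductive_set TP :: "(complex^'d::finite \<Rightarrow> complex) set" where
  TP0: "(\<lambda>z. 0) \<in> TP"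
| TPs: "Q \<in> TP \<Longrightarrow> (\<lambda>z. Q z + c * mono h z) \<in> TP"

lemma torus_nz: "z \<in> torus \<Longrightarrow> z$u \<noteq> 0"
  by (auto simp: torus_def) (metis norm_zero zero_neq_one)

lemma mono_cis: "mono h (\<chi> u. cis (\<theta>$u)) = ee h \<theta>"
  unfolding mono_def ee_prod
  by (intro prod.cong refl) (simp only: vec_lambda_beta cis_power_int, simp add: cis_conv_exp)

lemma mono_mult: "z \<in> torus \<Longrightarrow> mono h z * mono h' z = mono (h + h') z"
  by (simp add: mono_def prod.distrib[symmetric] power_int_add torus_nz)

lemma mono_cnj:
  assumes "z \<in> torus" shows "cnj (mono h z) = mono (- h) z"
proof -
  have "cnj (z$u) = inverse (z$u)" for u
  proof -
    have "norm (z$u) = 1" using assms by (simp add: torus_def)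
    then have "z$u * cnj (z$u) = 1" by (metis complex_norm_square of_real_1 power_one)
    then show ?thesis by (rule inverse_unique[symmetric])
  qed
  then show ?thesis
    by (simp add: mono_def cnj_prod power_int_inverse power_int_minus)
qed

lemma mono_zero [simp]: "mono 0 z = 1"
  by (simp add: mono_def)

lemma mono_axis: "mono (axis u 1) z = z$u"
proof -
  have "mono (axis u 1) z = (\<Prod>v\<in>UNIV. if v = u then z$u else 1)"
    unfolding mono_def by (intro prod.cong refl) (auto simp: axis_def)
  then show ?thesis by simp
qed

lemma TP_add: assumes "Q1 \<in> TP" "Q2 \<in> TP" shows "(\<lambda>z. Q1 z + Q2 z) \<in> TP"
  using assms(2)
proof (induction Q2 rule: TP.induct)
  case TP0 then show ?case using assms(1) by simp
next
  case (TPs Q c h)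
  have "(\<lambda>z. Q1 z + Q z + c * mono h z) \<in> TP" using TPs by (intro TP.TPs) simp
  then show ?case by (simp add: add.assoc)
qed

lemma TP_scale: "Q \<in> TP \<Longrightarrow> (\<lambda>z. a * Q z) \<in> TP"
proof (induction Q rule: TP.induct)
  case TP0 then show ?case by (simp add: TP.TP0)
next
  case (TPs Q c h)
  have "(\<lambda>z. a * Q z + (a * c) * mono h z) \<in> TP" using TPs by (intro TP.TPs)
  then show ?case by (simp add: distrib_left mult.assoc)
qed

lemma TP_mono: "(\<lambda>z. c * mono h z) \<in> TP"
  using TP.TPs[OF TP.TP0, of c h] by simp

lemma TP_const: "(\<lambda>z. c) \<in> TP"
  using TP_mono[of c 0] by simp

lemma TP_mono_mult: "Q \<in> TP \<Longrightarrow> \<exists>R\<in>TP. \<forall>z\<in>torus. Q z * mono h z = R z"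
proof (induction Q rule: TP.induct)
  case TP0 then show ?case by (intro bexI[of _ "\<lambda>z. 0"] TP.TP0) simp
next
  case (TPs Q c h')
  then obtain R where R: "R \<in> TP" "\<forall>z\<in>torus. Q z * mono h z = R z" by blast
  show ?case
    by (rule bexI[of _ "\<lambda>z. R z + c * mono (h' + h) z"])
       (use R in \<open>auto simp: distrib_right mono_mult[symmetric] mult.assoc intro: TP.TPs\<close>)
qed

lemma TP_mult: assumes "Q1 \<in> TP" "Q2 \<in> TP" shows "\<exists>R\<in>TP. \<forall>z\<in>torus. Q1 z * Q2 z = R z"
  using assms(2)
proof (induction Q2 rule: TP.induct)
  case TP0 then show ?case by (intro bexI[of _ "\<lambda>z. 0"] TP.TP0) simp
next
  case (TPs Q c h)
  then obtain R1 where R1: "R1 \<in> TP" "\<forall>z\<in>torus. Q1 z * Q z = R1 z" by blast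
  obtain R2 where R2: "R2 \<in> TP" "\<forall>z\<in>torus. Q1 z * mono h z = R2 z" using TP_mono_mult[OF assms(1)] by blast
  show ?case
    by (rule bexI[of _ "\<lambda>z. R1 z + c * R2 z"])
       (use R1 R2 in \<open>auto simp: distrib_left mult.left_commute intro: TP_add TP_scale\<close>)
qed

lemma TP_cnj: "Q \<in> TP \<Longrightarrow> \<exists>R\<in>TP. \<forall>z\<in>torus. cnj (Q z) = R z"
proof (induction Q rule: TP.induct)
  case TP0 then show ?case by (intro bexI[of _ "\<lambda>z. 0"] TP.TP0) simp
next
  case (TPs Q c h)
  then obtain R where R: "R \<in> TP" "\<forall>z\<in>torus. cnj (Q z) = R z" by blast
  show ?case
    by (rule bexI[of _ "\<lambda>z. R z + cnj c * mono (- h) z"])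
       (use R in \<open>auto simp: mono_cnj intro: TP.TPs\<close>)
qed

lemma torus_image: "torus = (\<lambda>\<theta>. \<chi> u. cis (\<theta>$u)) ` (cube :: (real^'d::finite) set)"
proof
  show "(\<lambda>\<theta>. \<chi> u. cis (\<theta>$u)) ` (cube :: (real^'d) set) \<subseteq> torus" by (auto simp: cis_torus)
  show "(torus :: (complex^'d) set) \<subseteq> (\<lambda>\<theta>. \<chi> u. cis (\<theta>$u)) ` cube"
  proof
    fix z :: "complex^'d" assume z: "z \<in> torus"
    have "z = (\<chi> u. cis ((\<chi> u. Arg (z$u)) $ u))"
    proof -
      have "cis (Arg (z$u)) = z$u" for u
        using z torus_nz[OF z, of u] by (simp add: cis_Arg torus_def sgn_div_norm)
      then show ?thesis by (simp add: vec_eq_iff)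
    qed
    moreover have "(\<chi> u. Arg (z$u)) \<in> (cube :: (real^'d) set)"
      using Arg_bounded by (auto simp: mem_box_cart less_imp_le)
    ultimately show "z \<in> (\<lambda>\<theta>. \<chi> u. cis (\<theta>$u)) ` cube" by blast
  qed
qed

lemma compact_torus: "compact (torus :: (complex^'d::finite) set)"
  unfolding torus_image by (intro compact_continuous_image continuous_intros compact_cbox)

lemma Re_mult_Re: "Re a * Re b = Re ((a * b + a * cnj b) / 2)"
  by (simp add: algebra_simps)

lemma SW_torus:
  fixes f :: "complex^'d::finite \<Rightarrow> real"
  assumes fc: "continuous_on torus f" and e: "e > 0"
  shows "\<exists>Q\<in>TP. \<forall>z\<in>torus. \<bar>f z - Re (Q z)\<bar> < e"
proof -
  define P where "P = (\<lambda>g. continuous_on torus g \<and> (\<exists>Q\<in>(TP :: (complex^'d \<Rightarrow> complex) set). \<forall>z\<in>torus. g z = Re (Q z)))"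
  have "\<exists>g. P g \<and> (\<forall>x\<in>torus. \<bar>f x - g x\<bar> < e)"
  proof (rule Stone_Weierstrass_HOL[OF compact_torus])
    show "P (\<lambda>x. c)" for c
      unfolding P_def by (auto intro!: bexI[OF _ TP_const[of "complex_of_real c"]])
    show "P g \<Longrightarrow> continuous_on torus g" for g by (simp add: P_def)
    show "P (\<lambda>x. g1 x + g2 x)" if "P g1 \<and> P g2" for g1 g2
    proof -
      from that obtain Q1 Q2 where "Q1 \<in> TP" "Q2 \<in> TP" "\<forall>z\<in>torus. g1 z = Re (Q1 z)" "\<forall>z\<in>torus. g2 z = Re (Q2 z)"
        "continuous_on torus g1" "continuous_on torus g2"
        unfolding P_def by blast
      then show ?thesis unfolding P_def
        by (auto intro!: continuous_intros bexI[OF _ TP_add[of Q1 Q2]])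
    qed
    show "P (\<lambda>x. g1 x * g2 x)" if "P g1 \<and> P g2" for g1 g2
    proof -
      from that obtain Q1 Q2 where Q: "Q1 \<in> TP" "Q2 \<in> TP" "\<forall>z\<in>torus. g1 z = Re (Q1 z)" "\<forall>z\<in>torus. g2 z = Re (Q2 z)"
        and c: "continuous_on torus g1" "continuous_on torus g2"
        unfolding P_def by blast
      obtain R1 where R1: "R1 \<in> TP" "\<forall>z\<in>torus. Q1 z * Q2 z = R1 z" using TP_mult[OF Q(1,2)] by blast
      obtain C where C: "C \<in> TP" "\<forall>z\<in>torus. cnj (Q2 z) = C z" using TP_cnj[OF Q(2)] by blast
      obtain R2 where R2: "R2 \<in> TP" "\<forall>z\<in>torus. Q1 z * C z = R2 z" using TP_mult[OF Q(1) C(1)] by blast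
      have "(\<lambda>z. (1/2) * (R1 z + R2 z)) \<in> TP" by (intro TP_scale TP_add R1(1) R2(1))
      moreover have "\<forall>z\<in>torus. g1 z * g2 z = Re ((1/2) * (R1 z + R2 z))"
        using Q R1 R2 C by (auto simp: Re_mult_Re)
      ultimately show ?thesis unfolding P_def using c by (intro conjI continuous_intros bexI) auto
    qed
    show "\<exists>g. P g \<and> g x \<noteq> g y" if "x \<in> torus \<and> y \<in> torus \<and> x \<noteq> y" for x y
    proof -
      from that obtain u where u: "x$u \<noteq> y$u" by (auto simp: vec_eq_iff)
      show ?thesis
      proof (cases "Re (x$u) = Re (y$u)")
        case True
        then have "Im (x$u) \<noteq> Im (y$u)" using u complex_eqI by blast
        moreover have "P (\<lambda>z. Im (z$u))"
          unfolding P_def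
          by (auto intro!: continuous_intros bexI[OF _ TP_mono[of "- \<i>" "axis u 1"]] simp: mono_axis)
        ultimately show ?thesis by blast
      next
        case False
        moreover have "P (\<lambda>z. Re (z$u))"
          unfolding P_def
          by (auto intro!: continuous_intros bexI[OF _ TP_mono[of 1 "axis u 1"]] simp: mono_axis)
        ultimately show ?thesis by blast
      qed
    qed
  qed (use fc e in auto)
  then obtain g Q where "Q \<in> TP" "\<forall>z\<in>torus. g z = Re (Q z)" "\<forall>x\<in>torus. \<bar>f x - g x\<bar> < e"
    unfolding P_def by blast
  then show ?thesis by auto
qed


lemma integral_Re_HK:
  fixes F :: "'n::euclidean_space \<Rightarrow> complex"
  assumes "F integrable_on S"
  shows "integral S (\<lambda>x. Re (F x)) = Re (integral S F)"
  using has_integral_Re[OF integrable_integral[OF assms]] by (rule integral_unique)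

lemma Kf_integral:
  fixes v :: "nat^'d::finite"
  shows "integral cube (Kf (block v w) \<mu>) = (2 * pi) ^ CARD('d) * real (\<Prod>u\<in>UNIV. v$u)"
  unfolding Kf_def by (simp add: orth_sum card_block)

lemma Kf_nonneg: "Kf B \<mu> \<theta> \<ge> 0"
  by (simp add: Kf_def)

lemma TP_fejer:
  fixes v :: "nat \<Rightarrow> nat^'d::finite" and \<mu> :: "nat \<Rightarrow> real^'d"
  assumes vlim: "\<And>u. filterlim (\<lambda>n. v n $ u) at_top sequentially" and vpos: "\<And>n u. v n $ u \<ge> 1"
    and mlim: "\<mu> \<longlonglongrightarrow> lam"
    and Q: "Q \<in> TP"
  shows "continuous_on UNIV (\<lambda>\<theta>::real^'d. Q (\<chi> u. cis (\<theta>$u)))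
    \<and> (\<lambda>n. integral cube (\<lambda>\<theta>. complex_of_real (Kf (block (v n) 0) (\<mu> n) \<theta>) * Q (\<chi> u. cis (\<theta>$u)))
           / complex_of_real ((2 * pi) ^ CARD('d) * real (\<Prod>u\<in>UNIV. v n $ u))) \<longlonglongrightarrow> Q (\<chi> u. cis (lam$u))"
  using Q
proof (induction Q rule: TP.induct)
  case TP0 then show ?case by simp
next
  case (TPs Q c h)
  let ?D = "\<lambda>n. complex_of_real ((2 * pi) ^ CARD('d) * real (\<Prod>u\<in>UNIV. v n $ u))"
  let ?K = "\<lambda>n \<theta>. complex_of_real (Kf (block (v n) 0) (\<mu> n) \<theta>)"
  have cQ: "continuous_on UNIV (\<lambda>\<theta>::real^'d. Q (\<chi> u. cis (\<theta>$u)))" using TPs by blast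
  have lQ: "(\<lambda>n. integral cube (\<lambda>\<theta>. ?K n \<theta> * Q (\<chi> u. cis (\<theta>$u))) / ?D n) \<longlonglongrightarrow> Q (\<chi> u. cis (lam$u))"
    using TPs by blast
  have c2: "continuous_on UNIV (\<lambda>\<theta>::real^'d. Q (\<chi> u. cis (\<theta>$u)) + c * mono h (\<chi> u. cis (\<theta>$u)))"
    unfolding mono_cis by (intro continuous_intros cQ)
  have i1: "(\<lambda>\<theta>. ?K n \<theta> * Q (\<chi> u. cis (\<theta>$u))) integrable_on cube" for n
    by (intro integrable_continuous continuous_intros continuous_on_subset[OF cQ]) auto
  have i2: "(\<lambda>\<theta>. c * (?K n \<theta> * ee h \<theta>)) integrable_on cube" for n
    by (intro integrable_continuous continuous_intros)
  have eq: "integral cube (\<lambda>\<theta>. ?K n \<theta> * (Q (\<chi> u. cis (\<theta>$u)) + c * mono h (\<chi> u. cis (\<theta>$u)))) / ?D n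
     = integral cube (\<lambda>\<theta>. ?K n \<theta> * Q (\<chi> u. cis (\<theta>$u))) / ?D n
       + c * (integral cube (\<lambda>\<theta>. ?K n \<theta> * ee h \<theta>) / ?D n)" for n
  proof -
    have "integral cube (\<lambda>\<theta>. ?K n \<theta> * (Q (\<chi> u. cis (\<theta>$u)) + c * mono h (\<chi> u. cis (\<theta>$u))))
        = integral cube (\<lambda>\<theta>. ?K n \<theta> * Q (\<chi> u. cis (\<theta>$u)) + c * (?K n \<theta> * ee h \<theta>))"
      by (simp add: mono_cis algebra_simps)
    also have "\<dots> = integral cube (\<lambda>\<theta>. ?K n \<theta> * Q (\<chi> u. cis (\<theta>$u))) + c * integral cube (\<lambda>\<theta>. ?K n \<theta> * ee h \<theta>)"
      using integral_add[OF i1 i2] by simp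
    finally show ?thesis by (simp add: add_divide_distrib)
  qed
  have "(\<lambda>n. integral cube (\<lambda>\<theta>. ?K n \<theta> * Q (\<chi> u. cis (\<theta>$u))) / ?D n
       + c * (integral cube (\<lambda>\<theta>. ?K n \<theta> * ee h \<theta>) / ?D n)) \<longlonglongrightarrow> Q (\<chi> u. cis (lam$u)) + c * ee h lam"
    by (intro tendsto_intros lQ fejer_mono_lim[OF vlim vpos mlim])
  then show ?case
    unfolding eq using c2 by (simp add: mono_cis)
qed

lemma tri3: "\<bar>a - b\<bar> < e / 3 \<Longrightarrow> \<bar>c - a\<bar> \<le> e / 3 \<Longrightarrow> \<bar>b - d\<bar> < e / 3 \<Longrightarrow> \<bar>c - d\<bar> < (e::real)"
  by (simp only: abs_less_iff abs_le_iff) linarith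

lemma fejer_lim:
  fixes v :: "nat \<Rightarrow> nat^'d::finite" and \<mu> :: "nat \<Rightarrow> real^'d" and f :: "complex^'d \<Rightarrow> real"
  assumes vlim: "\<And>u. filterlim (\<lambda>n. v n $ u) at_top sequentially" and vpos: "\<And>n u. v n $ u \<ge> 1"
    and mlim: "\<mu> \<longlonglongrightarrow> lam" and fcont: "continuous_on torus f"
  shows "(\<lambda>n. integral cube (\<lambda>\<theta>. Kf (block (v n) 0) (\<mu> n) \<theta> * f (\<chi> u. cis (\<theta>$u)))
           / ((2 * pi) ^ CARD('d) * real (\<Prod>u\<in>UNIV. v n $ u))) \<longlonglongrightarrow> f (\<chi> u. cis (lam$u))"
proof -
  define D where "D n = (2 * pi) ^ CARD('d) * real (\<Prod>u\<in>UNIV. v n $ u)" for n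
  define K where "K n = Kf (block (v n) 0) (\<mu> n)" for n
  have D0: "D n > 0" for n
    using vpos[of n] by (auto simp: D_def prod_pos Suc_le_eq intro!: prod_pos)
  have KD: "integral cube (K n) = D n" for n by (simp add: K_def D_def Kf_integral)
  have cf: "continuous_on UNIV (\<lambda>\<theta>::real^'d. f (\<chi> u. cis (\<theta>$u)))"
    by (rule continuous_on_compose2[OF fcont]) (auto intro!: continuous_intros simp: cis_torus)
  show ?thesis
    unfolding D_def[symmetric] K_def[symmetric]
  proof (rule tendstoI)
    fix \<epsilon> :: real assume e: "\<epsilon> > 0"
    obtain Q where Q: "Q \<in> TP" "\<forall>z\<in>torus. \<bar>f z - Re (Q z)\<bar> < \<epsilon> / 3"
      using SW_torus[OF fcont, of "\<epsilon> / 3"] e by auto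
    define g where "g \<theta> = Re (Q (\<chi> u. cis (\<theta>$u)))" for \<theta> :: "real^'d"
    have TPQ: "continuous_on UNIV (\<lambda>\<theta>::real^'d. Q (\<chi> u. cis (\<theta>$u)))"
      "(\<lambda>n. integral cube (\<lambda>\<theta>. complex_of_real (K n \<theta>) * Q (\<chi> u. cis (\<theta>$u))) / complex_of_real (D n))
         \<longlonglongrightarrow> Q (\<chi> u. cis (lam$u))"
      using TP_fejer[OF vlim vpos mlim Q(1)] unfolding D_def K_def by auto
    have cg: "continuous_on UNIV g" unfolding g_def by (intro continuous_intros TPQ(1))
    have gint: "integral cube (\<lambda>\<theta>. K n \<theta> * g \<theta>) / D n
        = Re (integral cube (\<lambda>\<theta>. complex_of_real (K n \<theta>) * Q (\<chi> u. cis (\<theta>$u))) / complex_of_real (D n))" for n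
    proof -
      have "integral cube (\<lambda>\<theta>. K n \<theta> * g \<theta>) = integral cube (\<lambda>\<theta>. Re (complex_of_real (K n \<theta>) * Q (\<chi> u. cis (\<theta>$u))))"
        by (simp add: g_def)
      also have "\<dots> = Re (integral cube (\<lambda>\<theta>. complex_of_real (K n \<theta>) * Q (\<chi> u. cis (\<theta>$u))))"
        by (rule integral_Re_HK) (auto simp: K_def intro!: integrable_continuous continuous_intros continuous_on_subset[OF TPQ(1)])
      finally show ?thesis by (simp add: Re_divide_of_real)
    qed
    have lg: "(\<lambda>n. integral cube (\<lambda>\<theta>. K n \<theta> * g \<theta>) / D n) \<longlonglongrightarrow> g lam"
      unfolding gint using tendsto_Re[OF TPQ(2)] by (simp add: g_def)
    then have ev: "eventually (\<lambda>n. dist (integral cube (\<lambda>\<theta>. K n \<theta> * g \<theta>) / D n) (g lam) < \<epsilon> / 3) sequentially"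
      using e by (intro tendstoD) auto
    have close: "\<bar>f (\<chi> u. cis (\<theta>$u)) - g \<theta>\<bar> < \<epsilon> / 3" for \<theta>
      using Q(2) cis_torus[of \<theta>] by (simp add: g_def)
    have approx: "\<bar>integral cube (\<lambda>\<theta>. K n \<theta> * f (\<chi> u. cis (\<theta>$u))) / D n - integral cube (\<lambda>\<theta>. K n \<theta> * g \<theta>) / D n\<bar> \<le> \<epsilon> / 3" for n
    proof -
      have i1: "(\<lambda>\<theta>. K n \<theta> * (f (\<chi> u. cis (\<theta>$u)) - g \<theta>)) integrable_on cube"
        by (auto simp: K_def intro!: integrable_continuous continuous_intros continuous_on_subset[OF cf] continuous_on_subset[OF cg])
      have i2: "(\<lambda>\<theta>. \<epsilon> / 3 * K n \<theta>) integrable_on cube"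
        by (auto simp: K_def intro!: integrable_continuous continuous_intros)
      have "\<bar>integral cube (\<lambda>\<theta>. K n \<theta> * (f (\<chi> u. cis (\<theta>$u)) - g \<theta>))\<bar> \<le> integral cube (\<lambda>\<theta>. \<epsilon> / 3 * K n \<theta>)"
      proof -
        have "integral cube (\<lambda>\<theta>. K n \<theta> * (f (\<chi> u. cis (\<theta>$u)) - g \<theta>)) \<le> integral cube (\<lambda>\<theta>. \<epsilon> / 3 * K n \<theta>)"
        proof (rule integral_le[OF i1 i2])
          fix \<theta> :: "real^'d"
          have K0: "K n \<theta> \<ge> 0" by (simp add: K_def Kf_nonneg)
          have a: "f (\<chi> u. cis (\<theta>$u)) - g \<theta> \<le> \<epsilon> / 3" using close[of \<theta>] by (smt (verit))
          have "K n \<theta> * (f (\<chi> u. cis (\<theta>$u)) - g \<theta>) \<le> K n \<theta> * (\<epsilon> / 3)" by (rule mult_left_mono[OF a K0])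
          then show "K n \<theta> * (f (\<chi> u. cis (\<theta>$u)) - g \<theta>) \<le> \<epsilon> / 3 * K n \<theta>"
            by (simp only: mult.commute)
        qed
        moreover have "- integral cube (\<lambda>\<theta>. K n \<theta> * (f (\<chi> u. cis (\<theta>$u)) - g \<theta>)) \<le> integral cube (\<lambda>\<theta>. \<epsilon> / 3 * K n \<theta>)"
        proof -
          have "integral cube (\<lambda>\<theta>. - (\<epsilon> / 3 * K n \<theta>)) \<le> integral cube (\<lambda>\<theta>. K n \<theta> * (f (\<chi> u. cis (\<theta>$u)) - g \<theta>))"
          proof (rule integral_le[OF integrable_neg[OF i2] i1])
            fix \<theta> :: "real^'d"
            have K0: "K n \<theta> \<ge> 0" by (simp add: K_def Kf_nonneg)
            have a: "- (\<epsilon> / 3) \<le> f (\<chi> u. cis (\<theta>$u)) - g \<theta>" using close[of \<theta>] by (smt (verit))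
            have "K n \<theta> * (- (\<epsilon> / 3)) \<le> K n \<theta> * (f (\<chi> u. cis (\<theta>$u)) - g \<theta>)" by (rule mult_left_mono[OF a K0])
            then show "- (\<epsilon> / 3 * K n \<theta>) \<le> K n \<theta> * (f (\<chi> u. cis (\<theta>$u)) - g \<theta>)"
              by (simp add: mult.commute)
          qed
          then show ?thesis by (simp add: integral_neg)
        qed
        ultimately show ?thesis by linarith
      qed
      also have "\<dots> = \<epsilon> / 3 * D n" by (simp add: KD)
      finally have "\<bar>integral cube (\<lambda>\<theta>. K n \<theta> * (f (\<chi> u. cis (\<theta>$u)) - g \<theta>))\<bar> \<le> \<epsilon> / 3 * D n" .
      moreover have "integral cube (\<lambda>\<theta>. K n \<theta> * (f (\<chi> u. cis (\<theta>$u)) - g \<theta>))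
          = integral cube (\<lambda>\<theta>. K n \<theta> * f (\<chi> u. cis (\<theta>$u))) - integral cube (\<lambda>\<theta>. K n \<theta> * g \<theta>)"
        by (simp add: right_diff_distrib, rule integral_diff)
           (auto simp: K_def intro!: integrable_continuous continuous_intros continuous_on_subset[OF cf] continuous_on_subset[OF cg])
      ultimately show ?thesis using D0[of n] by (simp add: diff_divide_distrib[symmetric] abs_div pos_divide_le_eq)
    qed
    have gl: "\<bar>g lam - f (\<chi> u. cis (lam$u))\<bar> < \<epsilon> / 3" using close[of lam] by (simp add: abs_minus_commute)
    show "eventually (\<lambda>n. dist (integral cube (\<lambda>\<theta>. K n \<theta> * f (\<chi> u. cis (\<theta>$u))) / D n) (f (\<chi> u. cis (lam$u))) < \<epsilon>) sequentially"
      using ev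
    proof eventually_elim
      case (elim n)
      then show ?case using approx[of n] gl unfolding dist_real_def by (rule tri3)
    qed
  qed
qed


definition unif :: "(nat \<Rightarrow> 'w \<Rightarrow> complex) \<Rightarrow> complex \<Rightarrow> bool" where
  "unif x L \<longleftrightarrow> (\<forall>\<epsilon>>0. \<forall>\<^sub>F n in sequentially. \<forall>w. cmod (x n w - L) \<le> \<epsilon>)"

lemma unif_add:
  assumes "unif x L" "unif y K" shows "unif (\<lambda>n w. x n w + y n w) (L + K)"
  unfolding unif_def
proof (intro allI impI)
  fix \<epsilon> :: real assume e: "\<epsilon> > 0"
  have e2: "\<epsilon>/2 > 0" using e by simp
  have "\<forall>\<^sub>F n in sequentially. \<forall>w. cmod (x n w - L) \<le> \<epsilon>/2" "\<forall>\<^sub>F n in sequentially. \<forall>w. cmod (y n w - K) \<le> \<epsilon>/2"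
    using assms e2 unfolding unif_def by blast+
  then show "\<forall>\<^sub>F n in sequentially. \<forall>w. cmod (x n w + y n w - (L + K)) \<le> \<epsilon>"
  proof eventually_elim
    case (elim n)
    show ?case
    proof
      fix w
      have "cmod (x n w + y n w - (L + K)) \<le> cmod (x n w - L) + cmod (y n w - K)"
        by (metis add_diff_add norm_triangle_ineq)
      then show "cmod (x n w + y n w - (L + K)) \<le> \<epsilon>" using elim[THEN spec, of w] by linarith
    qed
  qed
qed

lemma unif_cmult:
  assumes "unif x L" shows "unif (\<lambda>n w. c * x n w) (c * L)"
  unfolding unif_def
proof (intro allI impI)
  fix \<epsilon> :: real assume e: "\<epsilon> > 0"
  have "cmod c + 1 > 0" by (simp add: add_nonneg_pos)
  then have e2: "\<epsilon> / (cmod c + 1) > 0" using e by (rule divide_pos_pos[rotated])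
  have "\<forall>\<^sub>F n in sequentially. \<forall>w. cmod (x n w - L) \<le> \<epsilon> / (cmod c + 1)"
    using assms e2 unfolding unif_def by blast
  then show "\<forall>\<^sub>F n in sequentially. \<forall>w. cmod (c * x n w - c * L) \<le> \<epsilon>"
  proof eventually_elim
    case (elim n)
    show ?case
    proof
      fix w
      have "cmod (c * x n w - c * L) = cmod c * cmod (x n w - L)"
        by (simp add: norm_mult[symmetric] right_diff_distrib)
      also have "\<dots> \<le> cmod c * (\<epsilon> / (cmod c + 1))"
        using elim by (intro mult_left_mono) auto
      also have "\<dots> \<le> \<epsilon>"
      proof -
        have "cmod c * (\<epsilon> / (cmod c + 1)) = \<epsilon> * (cmod c / (cmod c + 1))" by simp
        also have "\<dots> \<le> \<epsilon> * 1"
          using e by (intro mult_left_mono) (auto simp: divide_le_eq_1 add_nonneg_pos)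
        finally show ?thesis by simp
      qed
      finally show "cmod (c * x n w - c * L) \<le> \<epsilon>" .
    qed
  qed
qed

lemma unif_zero: "unif (\<lambda>n w. 0) 0"
  by (simp add: unif_def)

lemma unif_sum:
  assumes "\<And>j. j \<in> J \<Longrightarrow> unif (x j) (L j)"
  shows "unif (\<lambda>n w. \<Sum>j\<in>J. x j n w) (\<Sum>j\<in>J. L j)"
proof (cases "finite J")
  case True
  then show ?thesis using assms
    by (induction J rule: finite_induct) (auto intro!: unif_add unif_zero)
next
  case False then show ?thesis by (simp add: unif_zero)
qed

lemma unif_tendsto:
  assumes "\<And>n w. x n w = y n" "y \<longlonglongrightarrow> L" shows "unif x L"
  unfolding unif_def
proof (intro allI impI)
  fix \<epsilon> :: real assume e: "\<epsilon> > 0"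
  have "\<forall>\<^sub>F n in sequentially. dist (y n) L < \<epsilon>" using assms(2) e by (rule tendstoD)
  then show "\<forall>\<^sub>F n in sequentially. \<forall>w. cmod (x n w - L) \<le> \<epsilon>"
    by eventually_elim (simp add: assms(1) dist_norm)
qed

lemma unif_bound:
  assumes "\<forall>\<^sub>F n in sequentially. \<forall>w. cmod (x n w) \<le> b n" "b \<longlonglongrightarrow> 0"
  shows "unif x 0"
  unfolding unif_def
proof (intro allI impI)
  fix \<epsilon> :: real assume e: "\<epsilon> > 0"
  have "\<forall>\<^sub>F n in sequentially. dist (b n) 0 < \<epsilon>" using assms(2) e by (rule tendstoD)
  with assms(1) show "\<forall>\<^sub>F n in sequentially. \<forall>w. cmod (x n w - 0) \<le> \<epsilon>"
    by eventually_elim (auto simp: dist_real_def intro: order.trans)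
qed

lemma sin_lower: fixes x :: real assumes "\<bar>x\<bar> \<le> 1" shows "\<bar>sin x\<bar> \<ge> \<bar>x\<bar> / 2"
proof -
  have "\<bar>sin x - (\<Sum>m<3. sin_coeff m * x ^ m)\<bar> \<le> inverse (fact 3) * \<bar>x\<bar> ^ 3"
    by (rule Maclaurin_sin_bound)
  moreover have "(\<Sum>m<3. sin_coeff m * x ^ m) = x"
    by (simp add: numeral_3_eq_3 sin_coeff_def)
  moreover have "\<bar>x\<bar> ^ 3 \<le> \<bar>x\<bar>"
  proof -
    have "\<bar>x\<bar> ^ 3 = \<bar>x\<bar> * \<bar>x\<bar>\<^sup>2" by (simp add: power3_eq_cube power2_eq_square)
    also have "\<dots> \<le> \<bar>x\<bar> * 1" using assms by (intro mult_left_mono) (auto simp: abs_square_le_1)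
    finally show ?thesis by simp
  qed
  moreover have "(fact 3 :: real) = 6" by (simp add: fact_numeral)
  ultimately have "\<bar>sin x - x\<bar> \<le> \<bar>x\<bar> / 6" by (simp add: divide_simps)
  then show ?thesis by linarith
qed

lemma exp_i_minus_1_lower:
  fixes x :: real assumes "\<bar>x\<bar> \<le> 1" shows "cmod (exp (\<i> * complex_of_real x) - 1) \<ge> \<bar>x\<bar> / 2"
proof -
  have "\<bar>sin x\<bar> = \<bar>Im (exp (\<i> * complex_of_real x) - 1)\<bar>" by (simp add: Im_exp)
  also have "\<dots> \<le> cmod (exp (\<i> * complex_of_real x) - 1)" by (rule abs_Im_le_cmod)
  finally show ?thesis using sin_lower[OF assms] by linarith
qed

lemma tw_axis: "tw \<mu> (axis s 1) = exp (- \<i> * complex_of_real (\<mu>$s))"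
proof -
  have "(\<Sum>u\<in>UNIV. real_of_int (axis s 1 $ u) * \<mu>$u) = \<mu>$s"
    by (subst sum.remove[of _ s]) (auto simp: axis_def intro!: sum.neutral)
  then show ?thesis by (simp add: tw_def)
qed


lemma Kf_block_shift: "Kf (block v w) \<mu> \<theta> = Kf (block v 0) \<mu> \<theta>"
proof -
  have inj: "inj_on (\<lambda>k. k + w) (block v 0)" by (auto simp: inj_on_def)
  have "(\<Sum>k\<in>block v w. tw \<mu> k * ee k \<theta>) = (\<Sum>k\<in>block v 0. tw \<mu> (k + w) * ee (k + w) \<theta>)"
    unfolding block_shift[of v w] by (simp add: sum.reindex[OF inj])
  also have "\<dots> = tw \<mu> w * ee w \<theta> * (\<Sum>k\<in>block v 0. tw \<mu> k * ee k \<theta>)"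
    unfolding sum_distrib_left by (intro sum.cong refl) (simp only: tw_add ee_mult[symmetric] mult_ac)
  finally show ?thesis unfolding Kf_def by (simp add: norm_mult)
qed

lemma ineq_aux:
  fixes A B c y r :: real
  assumes "A * c \<le> B" "c \<ge> y / 2" "y > r" "r > 0" "A \<ge> 0"
  shows "A \<le> 2 * B / r"
proof -
  have "r / 2 \<le> c" using assms(2,3) by linarith
  then have "A * (r / 2) \<le> A * c" using assms(5) by (rule mult_left_mono)
  then have "A * (r / 2) \<le> B" using assms(1) by linarith
  then have "A * r \<le> 2 * B" by linarith
  then show ?thesis using assms(4) by (simp only: pos_le_divide_eq)
qed

lemma powr_aux:
  fixes x \<delta> :: real
  assumes "x \<ge> 1"
  shows "1 / (sqrt x * x powr (- (1/2 - \<delta>))) = x powr (- \<delta>)"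
proof -
  have "sqrt x * x powr (- (1/2 - \<delta>)) = x powr (1/2) * x powr (- (1/2 - \<delta>))"
    using assms by (simp add: powr_half_sqrt)
  also have "\<dots> = x powr (1/2 + - (1/2 - \<delta>))" by (rule powr_add[symmetric])
  also have "\<dots> = x powr \<delta>" by simp
  finally show ?thesis by (simp only: powr_minus_divide)
qed

lemma Min_coord_le:
  fixes v :: "nat^'d::finite"
  shows "Min (range (\<lambda>u. v $ u)) \<le> v $ s"
  by (rule Min_le) auto

lemma Min_coord_ge1:
  fixes v :: "nat^'d::finite"
  assumes "\<And>u. v $ u \<ge> 1"
  shows "Min (range (\<lambda>u. v $ u)) \<ge> 1"
  using assms by (subst Min_ge_iff) auto

lemma exp_2lam_ne1:
  fixes l :: real
  assumes "-pi < l" "l \<le> pi" "l \<noteq> 0" "l \<noteq> pi"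
  shows "exp (- \<i> * complex_of_real l) * exp (- \<i> * complex_of_real l) \<noteq> 1"
proof
  assume a: "exp (- \<i> * complex_of_real l) * exp (- \<i> * complex_of_real l) = 1"
  have "exp (- \<i> * complex_of_real l) * exp (- \<i> * complex_of_real l) = exp (\<i> * complex_of_real (- 2 * l))"
    by (simp flip: exp_add) (simp add: algebra_simps)
  then have "cos (- 2 * l) = 1" using a by (metis Re_exp exp_zero one_complex.sel(1) Re_complex_of_real Im_i_times Re_i_times mult_1 exp_of_real cos_of_real cis_conv_exp cis.sel(1))
  then have "\<exists>n::int. - 2 * l = n * 2 * pi" by (simp only: cos_one_2pi_int)
  then obtain n :: int where n: "- 2 * l = real_of_int n * 2 * pi" by blast
  then have l: "l = - (real_of_int n) * pi" by (simp add: algebra_simps)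
  have "real_of_int n * pi < 1 * pi" using assms(1) l by simp
  then have "real_of_int n < 1" by (rule mult_less_cancel_right_pos[THEN iffD1, OF pi_gt_zero])
  moreover have "-1 * pi \<le> real_of_int n * pi" using assms(2) l by simp
  then have "-1 \<le> real_of_int n" by (rule mult_le_cancel_right_pos[THEN iffD1, OF pi_gt_zero])
  ultimately have "n = 0 \<or> n = -1" by linarith
  then show False using l assms(3,4) by auto
qed

context specfield begin

lemma E_twisted_sq:
  "(\<integral>\<omega>. (cmod (twisted_sum X \<mu> (block v w) \<omega>))\<^sup>2 \<partial>M)
     = integral cube (\<lambda>\<theta>. Kf (block v 0) \<mu> \<theta> * fc \<theta>) / (2 * pi) ^ CARD('d)"
proof -
  have eq: "(cmod (\<Sum>k\<in>block v w. tw \<mu> k * ee k \<theta>))\<^sup>2 = Kf (block v 0) \<mu> \<theta>" for \<theta>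
    using Kf_block_shift[of v w \<mu> \<theta>] unfolding Kf_def .
  show ?thesis by (simp only: twisted_sum_tw quad_real[OF finite_block] eq)
qed

lemma T1:
  fixes v :: "nat \<Rightarrow> nat^'d" and \<mu> :: "nat \<Rightarrow> real^'d"
  assumes vlim: "\<And>u. filterlim (\<lambda>n. v n $ u) at_top sequentially" and vpos: "\<And>n u. v n $ u \<ge> 1"
    and mlim: "\<mu> \<longlonglongrightarrow> lam"
  shows "unif (\<lambda>n w. (\<integral>\<omega>. twisted_sum X (\<mu> n) (block (v n) w) \<omega> * cnj (twisted_sum X (\<mu> n) (block (v n) w) \<omega>) \<partial>M)
            / complex_of_real (real (\<Prod>u\<in>UNIV. v n $ u))) (complex_of_real (f (\<chi> u. cis (lam$u))))"
proof (rule unif_tendsto)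
  let ?y = "\<lambda>n. complex_of_real (integral cube (\<lambda>\<theta>. Kf (block (v n) 0) (\<mu> n) \<theta> * f (\<chi> u. cis (\<theta>$u)))
           / ((2 * pi) ^ CARD('d) * real (\<Prod>u\<in>UNIV. v n $ u)))"
  show "(\<integral>\<omega>. twisted_sum X (\<mu> n) (block (v n) w) \<omega> * cnj (twisted_sum X (\<mu> n) (block (v n) w) \<omega>) \<partial>M)
            / complex_of_real (real (\<Prod>u\<in>UNIV. v n $ u)) = ?y n" for n w
  proof -
    have "(\<integral>\<omega>. twisted_sum X (\<mu> n) (block (v n) w) \<omega> * cnj (twisted_sum X (\<mu> n) (block (v n) w) \<omega>) \<partial>M)
        = complex_of_real (\<integral>\<omega>. (cmod (twisted_sum X (\<mu> n) (block (v n) w) \<omega>))\<^sup>2 \<partial>M)"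
      by (simp only: integral_complex_of_real[symmetric] complex_norm_square)
    then show ?thesis unfolding E_twisted_sq by (simp add: fc_def)
  qed
  show "?y \<longlonglongrightarrow> complex_of_real (f (\<chi> u. cis (lam$u)))"
    by (intro tendsto_of_real fejer_lim[OF vlim vpos mlim fcont])
qed

lemma cov_shift: "(\<integral>\<omega>. X (k + e) \<omega> * cnj (X (j + e) \<omega>) \<partial>M) = (\<integral>\<omega>. X k \<omega> * cnj (X j \<omega>) \<partial>M)"
  by (simp add: cov)

lemma T2:
  fixes v :: "nat \<Rightarrow> nat^'d" and \<mu>1 \<mu>2 :: "nat \<Rightarrow> real^'d"
  assumes vpos: "\<And>n u. v n $ u \<ge> 1"
    and minlim: "filterlim (\<lambda>n. Min (range (\<lambda>u. v n $ u))) at_top sequentially"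
    and m1: "\<mu>1 \<longlonglongrightarrow> lam" and m2: "\<mu>2 \<longlonglongrightarrow> lam"
    and d: "0 < \<delta>" and N: "\<forall>n\<ge>N. \<exists>s. \<bar>\<mu>1 n $ s - \<mu>2 n $ s\<bar> > real (v n $ s) powr (- (1/2 - \<delta>))"
    and Mf: "\<And>z. z \<in> torus \<Longrightarrow> f z \<le> Mf" and Mf0: "Mf \<ge> 0"
  shows "unif (\<lambda>n w. (\<integral>\<omega>. twisted_sum X (\<mu>1 n) (block (v n) w) \<omega> * cnj (twisted_sum X (\<mu>2 n) (block (v n) w) \<omega>) \<partial>M)
            / complex_of_real (real (\<Prod>u\<in>UNIV. v n $ u))) 0"
proof (rule unif_bound)
  define mn where "mn n = real (Min (range (\<lambda>u. v n $ u)))" for n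
  have mlim': "filterlim mn at_top sequentially"
    unfolding mn_def by (rule filterlim_compose[OF filterlim_real_sequentially minlim])
  show "(\<lambda>n. 10 * Mf * mn n powr (- \<delta>)) \<longlonglongrightarrow> 0"
    using tendsto_mult[OF tendsto_const[of "10 * Mf"] tendsto_neg_powr[OF _ mlim', of "- \<delta>"]] d by simp
  have "(\<lambda>n. \<mu>1 n - \<mu>2 n) \<longlonglongrightarrow> lam - lam" by (intro tendsto_intros m1 m2)
  then have "\<forall>\<^sub>F n in sequentially. dist (\<mu>1 n - \<mu>2 n) 0 < 1" by (intro tendstoD) auto
  moreover have "\<forall>\<^sub>F n in sequentially. n \<ge> N" by (rule eventually_ge_at_top)
  ultimately show "\<forall>\<^sub>F n in sequentially. \<forall>w. cmod ((\<integral>\<omega>. twisted_sum X (\<mu>1 n) (block (v n) w) \<omega> * cnj (twisted_sum X (\<mu>2 n) (block (v n) w) \<omega>) \<partial>M)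
            / complex_of_real (real (\<Prod>u\<in>UNIV. v n $ u))) \<le> 10 * Mf * mn n powr (- \<delta>)"
  proof eventually_elim
    case (elim n)
    show ?case
    proof
      fix w
      define C where "C = (\<integral>\<omega>. twisted_sum X (\<mu>1 n) (block (v n) w) \<omega> * cnj (twisted_sum X (\<mu>2 n) (block (v n) w) \<omega>) \<partial>M)"
      define V where "V = real (\<Prod>u\<in>UNIV. v n $ u)"
      have V0: "V > 0" using vpos[of n] by (auto simp: V_def Suc_le_eq intro!: prod_pos)
      obtain s where s: "\<bar>\<mu>1 n $ s - \<mu>2 n $ s\<bar> > real (v n $ s) powr (- (1/2 - \<delta>))"
        using N elim by blast
      define x where "x = \<mu>2 n $ s - \<mu>1 n $ s"
      have x1: "\<bar>x\<bar> \<le> 1"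
      proof -
        have "\<bar>x\<bar> = \<bar>(\<mu>1 n - \<mu>2 n) $ s\<bar>" by (simp add: x_def)
        also have "\<dots> \<le> norm (\<mu>1 n - \<mu>2 n)" by (rule component_le_norm_cart)
        finally show ?thesis using elim by (simp add: dist_norm)
      qed
      have vs: "v n $ s \<ge> 1" by (rule vpos)
      have sb: "cmod (tw (\<mu>1 n) (axis s 1) * cnj (tw (\<mu>2 n) (axis s 1)) - 1) * cmod C
          \<le> 5 * Mf * V / sqrt (real (v n $ s))"
        unfolding C_def V_def
        by (rule shift_bound[where \<phi>=cnj, OF _ _ _ L2_cnj _ cov_shift Mf Mf0 vs]) simp_all
      have alpha: "tw (\<mu>1 n) (axis s 1) * cnj (tw (\<mu>2 n) (axis s 1)) = exp (\<i> * complex_of_real x)"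
        by (simp add: tw_axis x_def exp_cnj flip: exp_add) (simp add: algebra_simps)
      have lb: "cmod (tw (\<mu>1 n) (axis s 1) * cnj (tw (\<mu>2 n) (axis s 1)) - 1) \<ge> \<bar>x\<bar> / 2"
        unfolding alpha by (rule exp_i_minus_1_lower[OF x1])
      have xs: "\<bar>x\<bar> > real (v n $ s) powr (- (1/2 - \<delta>))" using s by (simp add: x_def abs_minus_commute)
      have r0: "real (v n $ s) powr (- (1/2 - \<delta>)) > 0" using vs by simp
      have "cmod C \<le> 2 * (5 * Mf * V / sqrt (real (v n $ s))) / real (v n $ s) powr (- (1/2 - \<delta>))"
        using sb by (intro ineq_aux[OF _ lb xs r0]) (simp_all add: mult.commute)
      also have "\<dots> = 10 * Mf * V * (1 / (sqrt (real (v n $ s)) * real (v n $ s) powr (- (1/2 - \<delta>))))"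
        by simp
      also have "\<dots> = 10 * Mf * V * real (v n $ s) powr (- \<delta>)"
      proof -
        have "real (v n $ s) \<ge> 1" using vs by simp
        then show ?thesis by (simp only: powr_aux)
      qed
      also have "\<dots> \<le> 10 * Mf * V * mn n powr (- \<delta>)"
      proof (intro mult_left_mono powr_mono2')
        have "1 \<le> Min (range (\<lambda>u. v n $ u))" by (rule Min_coord_ge1[OF vpos])
        then show "0 < mn n" unfolding mn_def by (metis of_nat_0_less_iff less_le_trans zero_less_one)
        show "mn n \<le> real (v n $ s)" using Min_coord_le[of "v n" s] by (simp add: mn_def)
      qed (use d Mf0 V0 in auto)
      finally have "cmod C \<le> 10 * Mf * V * mn n powr (- \<delta>)" .
      then show "cmod (C / complex_of_real V) \<le> 10 * Mf * mn n powr (- \<delta>)"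
        using V0 by (simp add: norm_divide pos_divide_le_eq mult_ac)
    qed
  qed
qed

lemma T3:
  fixes v :: "nat \<Rightarrow> nat^'d" and \<mu>1 \<mu>2 :: "nat \<Rightarrow> real^'d"
  assumes stat: "strictly_stationary M X"
    and vpos: "\<And>n u. v n $ u \<ge> 1"
    and vs: "filterlim (\<lambda>n. v n $ s) at_top sequentially"
    and m1: "\<mu>1 \<longlonglongrightarrow> lam" and m2: "\<mu>2 \<longlonglongrightarrow> lam"
    and ls: "-pi < lam$s" "lam$s \<le> pi" "lam$s \<noteq> 0" "lam$s \<noteq> pi"
    and Mf: "\<And>z. z \<in> torus \<Longrightarrow> f z \<le> Mf" and Mf0: "Mf \<ge> 0"
  shows "unif (\<lambda>n w. (\<integral>\<omega>. twisted_sum X (\<mu>1 n) (block (v n) w) \<omega> * twisted_sum X (\<mu>2 n) (block (v n) w) \<omega> \<partial>M)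
            / complex_of_real (real (\<Prod>u\<in>UNIV. v n $ u))) 0"
proof (rule unif_bound)
  define \<alpha> where "\<alpha> n = tw (\<mu>1 n) (axis s 1) * tw (\<mu>2 n) (axis s 1)" for n
  define a0 where "a0 = exp (- \<i> * complex_of_real (lam$s)) * exp (- \<i> * complex_of_real (lam$s))"
  define c0 where "c0 = cmod (a0 - 1)"
  have c0: "c0 > 0" using exp_2lam_ne1[OF ls] by (simp add: c0_def a0_def)
  have "(\<lambda>n. cmod (\<alpha> n - 1)) \<longlonglongrightarrow> c0"
    unfolding \<alpha>_def c0_def a0_def tw_axis by (intro tendsto_intros m1 m2)
  then have ev1: "\<forall>\<^sub>F n in sequentially. cmod (\<alpha> n - 1) > c0 / 2"
    using c0 by (intro order_tendstoD(1)) auto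
  define vr where "vr n = real (v n $ s)" for n
  have vr: "filterlim vr at_top sequentially"
    unfolding vr_def by (rule filterlim_compose[OF filterlim_real_sequentially vs])
  show "(\<lambda>n. 10 * Mf / c0 * vr n powr (- (1/2))) \<longlonglongrightarrow> 0"
    using tendsto_mult[OF tendsto_const[of "10 * Mf / c0"] tendsto_neg_powr[OF _ vr, of "- (1/2)"]] by simp
  show "\<forall>\<^sub>F n in sequentially. \<forall>w. cmod ((\<integral>\<omega>. twisted_sum X (\<mu>1 n) (block (v n) w) \<omega> * twisted_sum X (\<mu>2 n) (block (v n) w) \<omega> \<partial>M)
            / complex_of_real (real (\<Prod>u\<in>UNIV. v n $ u))) \<le> 10 * Mf / c0 * vr n powr (- (1/2))"
    using ev1
  proof eventually_elim
    case (elim n)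
    show ?case
    proof
      fix w
      define P where "P = (\<integral>\<omega>. twisted_sum X (\<mu>1 n) (block (v n) w) \<omega> * twisted_sum X (\<mu>2 n) (block (v n) w) \<omega> \<partial>M)"
      define V where "V = real (\<Prod>u\<in>UNIV. v n $ u)"
      have V0: "V > 0" using vpos[of n] by (auto simp: V_def Suc_le_eq intro!: prod_pos)
      have vs1: "v n $ s \<ge> 1" by (rule vpos)
      have inv: "(\<integral>\<omega>. X (k + axis s 1) \<omega> * X (j + axis s 1) \<omega> \<partial>M) = (\<integral>\<omega>. X k \<omega> * X j \<omega> \<partial>M)" for k j
        by (rule stat_pseudo[OF stat meas])
      have sb: "cmod (\<alpha> n - 1) * cmod P \<le> 5 * Mf * V / sqrt (vr n)"
        unfolding P_def V_def \<alpha>_def vr_def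
        using shift_bound[where \<phi>="\<lambda>z. z", OF _ _ _ _ _ inv Mf Mf0 vs1] by simp
      have "cmod P \<le> 2 * (5 * Mf * V / sqrt (vr n)) / c0"
        using sb by (intro ineq_aux[of "cmod P" "cmod (\<alpha> n - 1)" _ "2 * cmod (\<alpha> n - 1)" c0]) (use elim c0 in \<open>simp_all add: mult.commute\<close>)
      also have "\<dots> = 10 * Mf / c0 * V * (1 / sqrt (vr n))" by (simp add: mult_ac)
      also have "1 / sqrt (vr n) = vr n powr (- (1/2))"
        using vs1 by (simp add: vr_def powr_minus_divide powr_half_sqrt)
      finally have "cmod P \<le> 10 * Mf / c0 * vr n powr (- (1/2)) * V" by (simp add: mult_ac)
      then show "cmod (P / complex_of_real V) \<le> 10 * Mf / c0 * vr n powr (- (1/2))"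
        using V0 by (simp add: norm_divide pos_divide_le_eq)
    qed
  qed
qed

end

lemma Gfun_Re: "Gfun m a b z = Re (\<Sum>j=1..m. Complex (a j) (- b j) * z j)"
  by (simp add: Gfun_def Re_sum)

lemma Re_sq: "(Re z)\<^sup>2 = Re (z * cnj z + z * z) / 2"
  by (simp add: power2_eq_square algebra_simps)

context specfield begin

lemma EG_formula:
  fixes S :: "nat \<Rightarrow> 'a \<Rightarrow> complex" and \<gamma> :: "nat \<Rightarrow> complex"
  assumes L: "\<And>j. L2 M (S j)" and J: "finite J"
  shows "(\<integral>\<omega>. (Re (\<Sum>j\<in>J. \<gamma> j * S j \<omega>))\<^sup>2 \<partial>M)
    = Re (\<Sum>j\<in>J. \<Sum>l\<in>J. \<gamma> j * cnj (\<gamma> l) * (\<integral>\<omega>. S j \<omega> * cnj (S l \<omega>) \<partial>M) + \<gamma> j * \<gamma> l * (\<integral>\<omega>. S j \<omega> * S l \<omega> \<partial>M)) / 2"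
proof -
  define Z where "Z \<omega> = (\<Sum>j\<in>J. \<gamma> j * S j \<omega>)" for \<omega>
  have LZ: "L2 M Z" unfolding Z_def by (intro L2_sum L2_scale L)
  have iW: "integrable M (\<lambda>\<omega>. Z \<omega> * cnj (Z \<omega>) + Z \<omega> * Z \<omega>)"
    by (intro Bochner_Integration.integrable_add L2_prod_int LZ L2_cnj)
  have "(\<integral>\<omega>. (Re (Z \<omega>))\<^sup>2 \<partial>M) = (\<integral>\<omega>. Re (Z \<omega> * cnj (Z \<omega>) + Z \<omega> * Z \<omega>) / 2 \<partial>M)"
    by (simp only: Re_sq)
  also have "\<dots> = (\<integral>\<omega>. Re (Z \<omega> * cnj (Z \<omega>) + Z \<omega> * Z \<omega>) \<partial>M) / 2"
    by (rule integral_divide_zero)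
  also have "(\<integral>\<omega>. Re (Z \<omega> * cnj (Z \<omega>) + Z \<omega> * Z \<omega>) \<partial>M) = Re (\<integral>\<omega>. Z \<omega> * cnj (Z \<omega>) + Z \<omega> * Z \<omega> \<partial>M)"
    by (rule integral_bounded_linear[OF bounded_linear_Re iW])
  also have "(\<integral>\<omega>. Z \<omega> * cnj (Z \<omega>) + Z \<omega> * Z \<omega> \<partial>M) = (\<integral>\<omega>. Z \<omega> * cnj (Z \<omega>) \<partial>M) + (\<integral>\<omega>. Z \<omega> * Z \<omega> \<partial>M)"
    by (intro Bochner_Integration.integral_add L2_prod_int LZ L2_cnj)
  also have "(\<integral>\<omega>. Z \<omega> * cnj (Z \<omega>) \<partial>M) = (\<Sum>j\<in>J. \<Sum>l\<in>J. \<gamma> j * cnj (\<gamma> l) * (\<integral>\<omega>. S j \<omega> * cnj (S l \<omega>) \<partial>M))"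
  proof -
    have "(\<integral>\<omega>. Z \<omega> * cnj (Z \<omega>) \<partial>M) = (\<integral>\<omega>. (\<Sum>j\<in>J. \<gamma> j * S j \<omega>) * (\<Sum>l\<in>J. cnj (\<gamma> l) * cnj (S l \<omega>)) \<partial>M)"
      by (simp add: Z_def cnj_sum)
    also have "\<dots> = (\<Sum>j\<in>J. \<Sum>l\<in>J. (\<integral>\<omega>. (\<gamma> j * S j \<omega>) * (cnj (\<gamma> l) * cnj (S l \<omega>)) \<partial>M))"
      by (rule L2_expand[OF J J]) (intro L2_scale L2_cnj L)+
    also have "\<dots> = (\<Sum>j\<in>J. \<Sum>l\<in>J. \<gamma> j * cnj (\<gamma> l) * (\<integral>\<omega>. S j \<omega> * cnj (S l \<omega>) \<partial>M))"
    proof (intro sum.cong refl)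
      fix j l
      have "(\<integral>\<omega>. (\<gamma> j * S j \<omega>) * (cnj (\<gamma> l) * cnj (S l \<omega>)) \<partial>M) = (\<integral>\<omega>. (\<gamma> j * cnj (\<gamma> l)) * (S j \<omega> * cnj (S l \<omega>)) \<partial>M)"
        by (simp add: ac_simps)
      also have "\<dots> = \<gamma> j * cnj (\<gamma> l) * (\<integral>\<omega>. S j \<omega> * cnj (S l \<omega>) \<partial>M)"
        by (rule Bochner_Integration.integral_mult_right) (intro L2_prod_int L L2_cnj)
      finally show "(\<integral>\<omega>. (\<gamma> j * S j \<omega>) * (cnj (\<gamma> l) * cnj (S l \<omega>)) \<partial>M) = \<gamma> j * cnj (\<gamma> l) * (\<integral>\<omega>. S j \<omega> * cnj (S l \<omega>) \<partial>M)" .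
    qed
    finally show ?thesis .
  qed
  also have "(\<integral>\<omega>. Z \<omega> * Z \<omega> \<partial>M) = (\<Sum>j\<in>J. \<Sum>l\<in>J. \<gamma> j * \<gamma> l * (\<integral>\<omega>. S j \<omega> * S l \<omega> \<partial>M))"
  proof -
    have "(\<integral>\<omega>. Z \<omega> * Z \<omega> \<partial>M) = (\<Sum>j\<in>J. \<Sum>l\<in>J. (\<integral>\<omega>. (\<gamma> j * S j \<omega>) * (\<gamma> l * S l \<omega>) \<partial>M))"
      unfolding Z_def by (rule L2_expand[OF J J]) (intro L2_scale L)+
    also have "\<dots> = (\<Sum>j\<in>J. \<Sum>l\<in>J. \<gamma> j * \<gamma> l * (\<integral>\<omega>. S j \<omega> * S l \<omega> \<partial>M))"
    proof (intro sum.cong refl)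
      fix j l
      have "(\<integral>\<omega>. (\<gamma> j * S j \<omega>) * (\<gamma> l * S l \<omega>) \<partial>M) = (\<integral>\<omega>. (\<gamma> j * \<gamma> l) * (S j \<omega> * S l \<omega>) \<partial>M)"
        by (simp add: ac_simps)
      also have "\<dots> = \<gamma> j * \<gamma> l * (\<integral>\<omega>. S j \<omega> * S l \<omega> \<partial>M)"
        by (rule Bochner_Integration.integral_mult_right) (intro L2_prod_int L)
      finally show "(\<integral>\<omega>. (\<gamma> j * S j \<omega>) * (\<gamma> l * S l \<omega>) \<partial>M) = \<gamma> j * \<gamma> l * (\<integral>\<omega>. S j \<omega> * S l \<omega> \<partial>M)" .
    qed
    finally show ?thesis .
  qed
  finally show ?thesis by (simp add: Z_def sum.distrib)
qed

end

lemma unif_cong: "unif x L \<Longrightarrow> L = L' \<Longrightarrow> unif x L'" by simp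

theorem lemma2p6:
  fixes M :: "'a measure"
    and X :: "int^'d::finite \<Rightarrow> 'a \<Rightarrow> complex"
    and f :: "complex^'d \<Rightarrow> real"
    and m :: nat
    and lam :: "real^'d"
    and v :: "nat \<Rightarrow> nat^'d"
    and lams :: "nat \<Rightarrow> nat \<Rightarrow> real^'d"
    and a b :: "nat \<Rightarrow> real"
  assumes "prob_space M"
    and meas: "\<And>k. X k \<in> borel_measurable M"
    and centered: "\<And>k. (\<integral>\<omega>. X k \<omega> \<partial>M) = 0"
    and sq_int: "integrable M (\<lambda>\<omega>. (norm (X 0 \<omega>))\<^sup>2)"
    and stat: "strictly_stationary M X"
    and mixing: "(\<lambda>n. rho' M X n) \<longlonglongrightarrow> 0"
    and spec: "is_spectral_density M X f"
    and f_cont: "continuous_on torus f"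
    and "m \<ge> 1"
    and lam_range: "\<forall>u. -pi < lam$u \<and> lam$u \<le> pi"
    and lam_P: "\<not> (\<forall>u. lam$u \<in> {-pi, 0, pi})"
    and v_pos: "\<And>n u. v n $ u \<ge> 1"
    and v_lim: "filterlim (\<lambda>n. Min (range (\<lambda>u. v n $ u))) at_top sequentially"
    and lams_range: "\<And>j n u. j \<in> {1..m} \<Longrightarrow> -pi < lams j n $ u \<and> lams j n $ u \<le> pi"
    and lams_lim: "\<And>j. j \<in> {1..m} \<Longrightarrow> (lams j \<longlonglongrightarrow> lam)"
    and sep: "\<And>j k. j \<in> {1..m} \<Longrightarrow> k \<in> {1..m} \<Longrightarrow> j \<noteq> k \<Longrightarrow>
        \<exists>\<delta>::real. 0 < \<delta> \<and> \<delta> < 1/2 \<and> (\<exists>N. \<forall>n\<ge>N. \<exists>s.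
           \<bar>lams j n $ s - lams k n $ s\<bar> > real (v n $ s) powr (- (1/2 - \<delta>)))"
  shows "(\<lambda>n. SUP w::int^'d. \<bar>1/2 * f (\<chi> u. cis (lam$u)) * (\<Sum>j=1..m. (a j)\<^sup>2 + (b j)\<^sup>2)
            - (1 / real (\<Prod>u\<in>UNIV. v n $ u)) *
              (\<integral>\<omega>. (Gfun m a b (\<lambda>j. twisted_sum X (lams j n) (block (v n) w) \<omega>))\<^sup>2 \<partial>M)\<bar>)
         \<longlonglongrightarrow> 0"
proof -
  interpret prob_space M by (rule assms(1))
  have L2X: "\<And>k. L2 M (X k)" by (rule stat_L2[OF stat meas sq_int])
  interpret sf: specfield M X f
    using assms(1) meas L2X spec f_cont by (simp add: specfield_def specfield_axioms_def)
  obtain Mf where Mf: "\<And>z. z \<in> torus \<Longrightarrow> f z \<le> Mf" and Mf0: "Mf \<ge> 0"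
  proof -
    have "compact (f ` torus)" by (rule compact_continuous_image[OF f_cont compact_torus])
    then obtain B where B: "\<forall>x\<in>f ` torus. \<bar>x\<bar> \<le> B" using compact_imp_bounded bounded_real by blast
    show ?thesis by (rule that[of "max B 0"]) (use B in auto)
  qed
  have vlim: "filterlim (\<lambda>n. v n $ u) at_top sequentially" for u
    by (rule filterlim_at_top_mono[OF v_lim]) (simp add: Min_coord_le)
  define J where "J = {1..m}"
  define S where "S j n w = twisted_sum X (lams j n) (block (v n) w)" for j n w
  define V where "V n = real (\<Prod>u\<in>UNIV. v n $ u)" for n
  define \<gamma> where "\<gamma> j = Complex (a j) (- b j)" for j
  define C where "C j l n w = (\<integral>\<omega>. S j n w \<omega> * cnj (S l n w \<omega>) \<partial>M) / complex_of_real (V n)" for j l n w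
  define P where "P j l n w = (\<integral>\<omega>. S j n w \<omega> * S l n w \<omega> \<partial>M) / complex_of_real (V n)" for j l n w
  define F where "F = f (\<chi> u. cis (lam$u))"
  have U1: "unif (C j j) (complex_of_real F)" if "j \<in> J" for j
    unfolding C_def S_def V_def F_def
    by (rule sf.T1[OF vlim v_pos lams_lim]) (use that in \<open>simp add: J_def\<close>)
  have U2: "unif (C j l) 0" if jl: "j \<in> J" "l \<in> J" "j \<noteq> l" for j l
  proof -
    obtain \<delta> N where d: "0 < \<delta>" and N: "\<forall>n\<ge>N. \<exists>s. \<bar>lams j n $ s - lams l n $ s\<bar> > real (v n $ s) powr (- (1/2 - \<delta>))"
    proof -
      have jm: "j \<in> {1..m}" "l \<in> {1..m}" using jl by (auto simp: J_def)
      show ?thesis using sep[OF jm jl(3)] that by blast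
    qed
    show ?thesis
      unfolding C_def S_def V_def
      by (rule sf.T2[OF v_pos v_lim lams_lim lams_lim d N Mf Mf0]) (use jl in \<open>simp_all add: J_def\<close>)
  qed
  obtain s where s: "lam$s \<notin> {-pi, 0, pi}" using lam_P by blast
  have U3: "unif (P j l) 0" if "j \<in> J" "l \<in> J" for j l
    unfolding P_def S_def V_def
    by (rule sf.T3[OF stat v_pos vlim lams_lim lams_lim _ _ _ _ Mf Mf0])
       (use that s lam_range in \<open>auto simp: J_def\<close>)
  define E where "E n w = (\<Sum>j\<in>J. \<Sum>l\<in>J. \<gamma> j * cnj (\<gamma> l) * C j l n w + \<gamma> j * \<gamma> l * P j l n w)" for n w
  define L where "L = (\<Sum>j\<in>J. \<Sum>l\<in>J. if j = l then \<gamma> j * cnj (\<gamma> j) * complex_of_real F else 0)"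
  have UE: "unif E L"
    unfolding E_def L_def
  proof (intro unif_sum)
    fix j l assume jl: "j \<in> J" "l \<in> J"
    show "unif (\<lambda>n w. \<gamma> j * cnj (\<gamma> l) * C j l n w + \<gamma> j * \<gamma> l * P j l n w)
            (if j = l then \<gamma> j * cnj (\<gamma> j) * complex_of_real F else 0)"
    proof (cases "j = l")
      case True
      then have l: "l = j" by simp
      show ?thesis unfolding l
        by (rule unif_cong[OF unif_add[OF unif_cmult[OF U1[OF jl(1)]] unif_cmult[OF U3[OF jl(1) jl(1)]]]]) simp
    next
      case False
      show ?thesis
        by (rule unif_cong[OF unif_add[OF unif_cmult[OF U2[OF jl False]] unif_cmult[OF U3[OF jl]]]]) (use False in simp)
    qed
  qed
  have ReL: "Re L = F * (\<Sum>j=1..m. (a j)\<^sup>2 + (b j)\<^sup>2)"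
  proof -
    have "L = (\<Sum>j\<in>J. \<gamma> j * cnj (\<gamma> j) * complex_of_real F)"
      unfolding L_def by (intro sum.cong refl) (simp add: J_def)
    also have "\<dots> = complex_of_real (F * (\<Sum>j\<in>J. (a j)\<^sup>2 + (b j)\<^sup>2))"
      by (simp add: \<gamma>_def sum_distrib_left complex_eq_iff power2_eq_square algebra_simps)
    finally show ?thesis by (simp add: J_def)
  qed
  have EG: "(1 / real (\<Prod>u\<in>UNIV. v n $ u)) *
              (\<integral>\<omega>. (Gfun m a b (\<lambda>j. twisted_sum X (lams j n) (block (v n) w) \<omega>))\<^sup>2 \<partial>M) = Re (E n w) / 2" for n w
  proof -
    have V0: "V n > 0" using v_pos[of n] by (auto simp: V_def Suc_le_eq intro!: prod_pos)
    have "(\<integral>\<omega>. (Gfun m a b (\<lambda>j. twisted_sum X (lams j n) (block (v n) w) \<omega>))\<^sup>2 \<partial>M)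
        = (\<integral>\<omega>. (Re (\<Sum>j\<in>J. \<gamma> j * S j n w \<omega>))\<^sup>2 \<partial>M)"
      by (simp add: Gfun_Re J_def \<gamma>_def S_def)
    also have "\<dots> = Re (\<Sum>j\<in>J. \<Sum>l\<in>J. \<gamma> j * cnj (\<gamma> l) * (\<integral>\<omega>. S j n w \<omega> * cnj (S l n w \<omega>) \<partial>M)
         + \<gamma> j * \<gamma> l * (\<integral>\<omega>. S j n w \<omega> * S l n w \<omega> \<partial>M)) / 2"
      by (rule sf.EG_formula) (auto simp: S_def J_def intro!: L2_twisted L2X)
    also have "(\<Sum>j\<in>J. \<Sum>l\<in>J. \<gamma> j * cnj (\<gamma> l) * (\<integral>\<omega>. S j n w \<omega> * cnj (S l n w \<omega>) \<partial>M)
         + \<gamma> j * \<gamma> l * (\<integral>\<omega>. S j n w \<omega> * S l n w \<omega> \<partial>M)) = complex_of_real (V n) * E n w"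
      using V0 by (simp add: E_def C_def P_def sum_distrib_left algebra_simps)
    finally have h: "(\<integral>\<omega>. (Gfun m a b (\<lambda>j. twisted_sum X (lams j n) (block (v n) w) \<omega>))\<^sup>2 \<partial>M)
        = Re (complex_of_real (V n) * E n w) / 2" .
    have "Re (complex_of_real (V n) * E n w) = V n * Re (E n w)" by simp
    then have "(\<integral>\<omega>. (Gfun m a b (\<lambda>j. twisted_sum X (lams j n) (block (v n) w) \<omega>))\<^sup>2 \<partial>M) = V n * Re (E n w) / 2"
      using h by simp
    moreover have "real (\<Prod>u\<in>UNIV. v n $ u) = V n" by (simp add: V_def)
    ultimately show ?thesis using V0 by (simp only:) simp
  qed
  show ?thesis
    unfolding EG F_def[symmetric]
  proof (rule tendstoI)
    fix \<epsilon> :: real assume e: "\<epsilon> > 0"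
    have "\<forall>\<^sub>F n in sequentially. \<forall>w. cmod (E n w - L) \<le> \<epsilon>"
      using UE e unfolding unif_def by blast
    then show "\<forall>\<^sub>F n in sequentially. dist (SUP w::int^'d. \<bar>1/2 * F * (\<Sum>j=1..m. (a j)\<^sup>2 + (b j)\<^sup>2) - Re (E n w) / 2\<bar>) 0 < \<epsilon>"
    proof eventually_elim
      case (elim n)
      have b: "\<bar>1/2 * F * (\<Sum>j=1..m. (a j)\<^sup>2 + (b j)\<^sup>2) - Re (E n w) / 2\<bar> \<le> \<epsilon> / 2" for w
      proof -
        have "1/2 * F * (\<Sum>j=1..m. (a j)\<^sup>2 + (b j)\<^sup>2) - Re (E n w) / 2 = Re (L - E n w) / 2"
          by (simp add: ReL diff_divide_distrib)
        then have "\<bar>1/2 * F * (\<Sum>j=1..m. (a j)\<^sup>2 + (b j)\<^sup>2) - Re (E n w) / 2\<bar> = \<bar>Re (L - E n w) / 2\<bar>"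
          by (rule arg_cong)
        also have "\<dots> = \<bar>Re (L - E n w)\<bar> / 2" by (simp only: abs_divide abs_numeral)
        also have "\<dots> \<le> cmod (E n w - L) / 2"
          using abs_Re_le_cmod[of "L - E n w"] by (simp add: norm_minus_commute)
        also have "\<dots> \<le> \<epsilon> / 2" using elim by simp
        finally show ?thesis .
      qed
      have bdd: "bdd_above (range (\<lambda>w::int^'d. \<bar>1/2 * F * (\<Sum>j=1..m. (a j)\<^sup>2 + (b j)\<^sup>2) - Re (E n w) / 2\<bar>))"
        using b by (intro bdd_aboveI2) 
      have up: "(SUP w::int^'d. \<bar>1/2 * F * (\<Sum>j=1..m. (a j)\<^sup>2 + (b j)\<^sup>2) - Re (E n w) / 2\<bar>) \<le> \<epsilon> / 2"
        using b by (intro cSUP_least) auto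
      have lo: "0 \<le> (SUP w::int^'d. \<bar>1/2 * F * (\<Sum>j=1..m. (a j)\<^sup>2 + (b j)\<^sup>2) - Re (E n w) / 2\<bar>)"
        by (rule order.trans[OF abs_ge_zero cSUP_upper[OF UNIV_I bdd]])
      show ?case using up lo e by (simp add: dist_real_def)
    qed
  qed
qed


end
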